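(* Assume the setting described in the context and let $\beta<0$. Then the fixed point equation $$\rho(x)=\frac{\Upsilon(x)\exp\big(-\beta\int_{\mathbb{R}^2}\ln|x-y|\,\rho(y)\,dy+2H(x)\big)}{\int_{\mathbb{R}^2}\Upsilon(z)\exp\big(-\beta\int_{\mathbb{R}^2}\ln|z-y|\,\rho(y)\,dy+2H(z)\big)\,dz}$$ has at most one solution $\rho$ (so the solution $\rho_{\beta,H}$ is unique).
   Context: Let $\Upsilon\in L^\infty(\mathbb{R}^2)$, $\Upsilon\ge0$, $\Upsilon\not\equiv0$, and $H$ an entire harmonic function on $\mathbb{R}^2$ such that for every $0<\gamma<2$, $\int_{B_1(y)}\Upsilon(x)e^{2H(x)}|x-y|^{-\gamma}dx\to0$ as $|y|\to\infty$, and $\int\Upsilon(x)e^{2H(x)}|x|^qdx<\infty$ for some $q>0$. A solution means a probability density $\rho\ge0$ on $\mathbb{R}^2$ with finite logarithmic energy, $\int\int|\ln|x-y||\rho(x)\rho(y)\,dx\,dy<\infty$, for which the integrals in the equation are finite and the normalizing denominator is positive, satisfying the equation almost everywhere. *)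

theory Defs
  imports "HOL-Analysis.Analysis"
begin

text \<open>The plane R^2 is identified with the type complex (a euclidean space with
  Lebesgue measure lborel); |x - y| is norm (x - y).\<close>

definition entire_harmonic :: "(complex \<Rightarrow> real) \<Rightarrow> bool" where
  "entire_harmonic H \<longleftrightarrow>
     (\<exists>Hx Hy Hxx Hxy Hyx Hyy.
        (\<forall>z. (H has_derivative (\<lambda>h. Re h * Hx z + Im h * Hy z)) (at z)) \<and>
        (\<forall>z. (Hx has_derivative (\<lambda>h. Re h * Hxx z + Im h * Hxy z)) (at z)) \<and>
        (\<forall>z. (Hy has_derivative (\<lambda>h. Re h * Hyx z + Im h * Hyy z)) (at z)) \<and>
        continuous_on UNIV Hxx \<and> continuous_on UNIV Hxy \<and>
        continuous_on UNIV Hyx \<and> continuous_on UNIV Hyy \<and>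
        (\<forall>z. Hxx z + Hyy z = 0))"

definition log_pot :: "(complex \<Rightarrow> real) \<Rightarrow> complex \<Rightarrow> real" where
  "log_pot \<rho> x = (\<integral>y. ln (norm (x - y)) * \<rho> y \<partial>lborel)"

definition fp_num :: "(complex \<Rightarrow> real) \<Rightarrow> (complex \<Rightarrow> real) \<Rightarrow> real \<Rightarrow> (complex \<Rightarrow> real)
    \<Rightarrow> complex \<Rightarrow> real" where
  "fp_num \<Upsilon> H \<beta> \<rho> x = \<Upsilon> x * exp (- \<beta> * log_pot \<rho> x + 2 * H x)"

definition is_fp_solution :: "(complex \<Rightarrow> real) \<Rightarrow> (complex \<Rightarrow> real) \<Rightarrow> real
    \<Rightarrow> (complex \<Rightarrow> real) \<Rightarrow> bool" where
  "is_fp_solution \<Upsilon> H \<beta> \<rho> \<longleftrightarrow>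
     \<rho> \<in> borel_measurable lborel \<and>
     (\<forall>x. 0 \<le> \<rho> x) \<and>
     (\<integral>\<^sup>+ x. ennreal (\<rho> x) \<partial>lborel) = 1 \<and>
     (\<integral>\<^sup>+ p. ennreal (\<bar>ln (norm (fst p - snd p))\<bar> * \<rho> (fst p) * \<rho> (snd p))
        \<partial>(lborel \<Otimes>\<^sub>M lborel)) < \<infinity> \<and>
     (AE x in lborel. integrable lborel (\<lambda>y. ln (norm (x - y)) * \<rho> y)) \<and>
     integrable lborel (fp_num \<Upsilon> H \<beta> \<rho>) \<and>
     (\<integral>z. fp_num \<Upsilon> H \<beta> \<rho> z \<partial>lborel) > 0 \<and>
     (AE x in lborel. \<rho> x = fp_num \<Upsilon> H \<beta> \<rho> x / (\<integral>z. fp_num \<Upsilon> H \<beta> \<rho> z \<partial>lborel))"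

end

theory Submission
  imports Defs "HOL-Probability.Distributions" "HOL-Real_Asymp.Real_Asymp"
begin


lemma exp_int_half_line:
  fixes s :: real assumes s: "0 < s"
  shows "(\<integral>\<^sup>+ t. ennreal (exp (- t * s) / 2) * indicator {0..} t \<partial>lborel) = ennreal (1 / (2 * s))"
proof -
  have "(\<integral>\<^sup>+ t. ennreal (exp (- t * s) / 2) * indicator {0..} t \<partial>lborel) = 0 - (- exp (- 0 * s) / (2 * s))"
  proof (rule nn_integral_FTC_atLeast)
    show "(\<lambda>t. exp (- t * s) / 2) \<in> borel_measurable borel" by measurable
    fix x :: real
    show "DERIV (\<lambda>t. - exp (- t * s) / (2 * s)) x :> exp (- x * s) / 2"
      using s by (auto intro!: derivative_eq_intros simp: field_simps)
    show "0 \<le> exp (- x * s) / 2" by simp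
  next
    show "((\<lambda>t. - exp (- t * s) / (2 * s)) \<longlongrightarrow> 0) at_top"
      using s by real_asymp
  qed
  then show ?thesis by simp
qed



lemma inv_int_Icc:
  fixes a b :: real assumes "0 < a" "a \<le> b"
  shows "(\<integral>\<^sup>+ s. ennreal (1 / (2 * s)) * indicator {a..b} s \<partial>lborel) = ennreal ((ln b - ln a) / 2)"
proof -
  have "(\<integral>\<^sup>+ s. ennreal (1 / (2 * s)) * indicator {a..b} s \<partial>lborel) = ln b / 2 - ln a / 2"
  proof (rule nn_integral_FTC_Icc)
    show "(\<lambda>s::real. 1 / (2 * s)) \<in> borel_measurable borel" by measurable
    fix x assume x: "x \<in> {a..b}"
    then show "DERIV (\<lambda>s. ln s / 2) x :> 1 / (2 * x)"
      using assms by (auto intro!: derivative_eq_intros simp: field_simps)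
    show "0 \<le> 1 / (2 * x)" using x assms by auto
  qed (use assms in auto)
  then show ?thesis by (simp add: diff_divide_distrib)
qed

lemma exp_diff_Icc:
  fixes a b t :: real assumes "0 < t" "a \<le> b"
  shows "ennreal ((exp (- t * a) - exp (- t * b)) / (2 * t)) =
    (\<integral>\<^sup>+ s. ennreal (exp (- t * s) / 2) * indicator {a..b} s \<partial>lborel)"
proof -
  have "(\<integral>\<^sup>+ s. ennreal (exp (- t * s) / 2) * indicator {a..b} s \<partial>lborel) =
     (- exp (- t * b) / (2 * t)) - (- exp (- t * a) / (2 * t))"
  proof (rule nn_integral_FTC_Icc)
    show "(\<lambda>s. exp (- t * s) / 2) \<in> borel_measurable borel" by measurable
    fix x
    show "DERIV (\<lambda>s. - exp (- t * s) / (2 * t)) x :> exp (- t * x) / 2"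
      using assms by (auto intro!: derivative_eq_intros simp: field_simps)
    show "0 \<le> exp (- t * x) / 2" by simp
  qed (use assms in auto)
  then show ?thesis by (simp add: field_simps diff_divide_distrib)
qed

lemma frullani_nn:
  fixes a b :: real assumes ab: "0 < a" "a \<le> b"
  shows "(\<integral>\<^sup>+ t. ennreal ((exp (- t * a) - exp (- t * b)) / (2 * t)) * indicator {0..} t \<partial>lborel)
     = ennreal ((ln b - ln a) / 2)"
proof -
  have "(\<integral>\<^sup>+ t. ennreal ((exp (- t * a) - exp (- t * b)) / (2 * t)) * indicator {0..} t \<partial>lborel)
     = (\<integral>\<^sup>+ t. (\<integral>\<^sup>+ s. ennreal (exp (- t * s) / 2) * indicator {a..b} s * indicator {0..} t \<partial>lborel) \<partial>lborel)"
  proof (rule nn_integral_cong_AE)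
    show "AE t in lborel. ennreal ((exp (- t * a) - exp (- t * b)) / (2 * t)) * indicator {0..} t =
        (\<integral>\<^sup>+ s. ennreal (exp (- t * s) / 2) * indicator {a..b} s * indicator {0..} t \<partial>lborel)"
      using AE_lborel_singleton[of 0]
    proof eventually_elim
      case (elim t)
      show ?case
      proof (cases "0 \<le> t")
        case True
        then have "0 < t" using elim by auto
        then show ?thesis using exp_diff_Icc[OF \<open>0 < t\<close> ab(2)] True by simp
      qed simp
    qed
  qed
  also have "\<dots> = (\<integral>\<^sup>+ s. (\<integral>\<^sup>+ t. ennreal (exp (- t * s) / 2) * indicator {a..b} s * indicator {0..} t \<partial>lborel) \<partial>lborel)"
    by (rule lborel_pair.Fubini') measurable
  also have "\<dots> = (\<integral>\<^sup>+ s. ennreal (1 / (2 * s)) * indicator {a..b} s \<partial>lborel)"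
  proof (rule nn_integral_cong)
    fix s :: real
    show "(\<integral>\<^sup>+ t. ennreal (exp (- t * s) / 2) * indicator {a..b} s * indicator {0..} t \<partial>lborel) =
       ennreal (1 / (2 * s)) * indicator {a..b} s"
    proof (cases "s \<in> {a..b}")
      case True
      then have "0 < s" using ab by auto
      then show ?thesis using True exp_int_half_line[OF \<open>0 < s\<close>] by simp
    qed simp
  qed
  also have "\<dots> = ennreal ((ln b - ln a) / 2)" by (rule inv_int_Icc[OF ab])
  finally show ?thesis .
qed



definition phi :: "real \<Rightarrow> real \<Rightarrow> real" where
  "phi r t = indicator {0..} t * ((exp (- t) - exp (- t * r\<^sup>2)) / (2 * t))"

lemma phi_measurable[measurable]:
  assumes [measurable]: "f \<in> borel_measurable M" "g \<in> borel_measurable M"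
  shows "(\<lambda>x. phi (f x) (g x)) \<in> borel_measurable M"
  unfolding phi_def by measurable

lemma ennreal_phi: "ennreal (phi r t) = ennreal ((exp (- t * 1) - exp (- t * r\<^sup>2)) / (2 * t)) * indicator {0..} t"
  by (simp add: phi_def indicator_def)

lemma T1: assumes "1 \<le> r" shows "0 \<le> phi r t"
proof (cases "0 < t")
  case True
  have r2: "1 \<le> r\<^sup>2" using assms by (simp add: one_le_power)
  have "exp (- t * r\<^sup>2) \<le> exp (- t)" using True r2 by (simp add: mult_le_cancel_left1)
  then show ?thesis using True unfolding phi_def by (auto intro!: divide_nonneg_pos)
qed (auto simp: phi_def indicator_def)


lemma T2: assumes r: "1 \<le> r" shows "(\<integral>\<^sup>+ t. ennreal (phi r t) \<partial>lborel) = ennreal (ln r)"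
    proof -
      have r2: "1 \<le> r\<^sup>2" using r by (simp add: one_le_power)
      have lnr2: "ln (r\<^sup>2) = 2 * ln r" using r by (simp add: ln_realpow)
      have "(\<integral>\<^sup>+ t. ennreal (phi r t) \<partial>lborel) = (\<integral>\<^sup>+ t. ennreal ((exp (- t * 1) - exp (- t * r\<^sup>2)) / (2 * t)) * indicator {0..} t \<partial>lborel)"
        by (simp only: ennreal_phi)
      also have "\<dots> = ennreal ((ln (r\<^sup>2) - ln 1) / 2)" by (rule frullani_nn) (use r2 in auto)
      finally show ?thesis using lnr2 by simp
    qed

lemma T3: assumes r: "1 \<le> r" shows "has_bochner_integral lborel (phi r) (ln r)"
    proof (rule has_bochner_integral_nn_integral)
      show "phi r \<in> borel_measurable lborel" unfolding phi_def by measurable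
      show "AE x in lborel. 0 \<le> phi r x" using T1[OF r] by simp
      show "0 \<le> ln r" using r by simp
    qed (rule T2[OF r])

lemma ennreal_mphi: "ennreal (- phi r t) = ennreal ((exp (- t * r\<^sup>2) - exp (- t * 1)) / (2 * t)) * indicator {0..} t"
proof (cases "0 \<le> t")
  case True
  have "- phi r t = (exp (- t * r\<^sup>2) - exp (- t * 1)) / (2 * t)"
    using True unfolding phi_def by (simp add: divide_simps)
  then show ?thesis using True by simp
qed (simp add: phi_def)

lemma T1': assumes "0 < r" "r < 1" shows "0 \<le> - phi r t"
proof (cases "0 < t")
  case True
  have r2: "r\<^sup>2 \<le> 1" using assms by (simp add: power_le_one)
  have "exp (- t) \<le> exp (- t * r\<^sup>2)" using True r2 by (simp add: mult_le_cancel_left1)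
  then have "0 \<le> (exp (- t * r\<^sup>2) - exp (- t)) / (2 * t)" using True by simp
  moreover have "- phi r t = (exp (- t * r\<^sup>2) - exp (- t)) / (2 * t)" using True
    unfolding phi_def by (simp add: field_simps)
  ultimately show ?thesis by simp
qed (auto simp: phi_def indicator_def)

lemma T2': assumes r: "0 < r" "r < 1" shows "(\<integral>\<^sup>+ t. ennreal (- phi r t) \<partial>lborel) = ennreal (- ln r)"
    proof -
      have r2: "r\<^sup>2 \<le> 1" "0 < r\<^sup>2" using r by (auto simp add: power_le_one)
      have lnr2: "ln (r\<^sup>2) = 2 * ln r" using r by (simp add: ln_realpow)
      have "(\<integral>\<^sup>+ t. ennreal (- phi r t) \<partial>lborel) = (\<integral>\<^sup>+ t. ennreal ((exp (- t * r\<^sup>2) - exp (- t * 1)) / (2 * t)) * indicator {0..} t \<partial>lborel)"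
        by (simp only: ennreal_mphi)
      also have "\<dots> = ennreal ((ln 1 - ln (r\<^sup>2)) / 2)" by (rule frullani_nn) (use r2 in auto)
      finally show ?thesis using lnr2 by simp
    qed

lemma T3': assumes r: "0 < r" "r < 1" shows "has_bochner_integral lborel (phi r) (ln r)"
proof -
  have "has_bochner_integral lborel (\<lambda>t. - phi r t) (- ln r)"
    proof (rule has_bochner_integral_nn_integral)
      show "(\<lambda>t. - phi r t) \<in> borel_measurable lborel" unfolding phi_def by measurable
      show "AE x in lborel. 0 \<le> - phi r x" using T1'[OF r] by simp
      show "0 \<le> - ln r" using r by simp
    qed (rule T2'[OF r])
  from has_bochner_integral_minus[OF this] show ?thesis by simp
qed

lemma phi_int:
  fixes r :: real assumes r: "0 < r"
  shows "has_bochner_integral lborel (phi r) (ln r)"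
proof (cases "1 \<le> r")
  case True then show ?thesis by (rule T3)
next
  case False then show ?thesis using T3' r by simp
qed

lemma phi_abs_int:
  fixes r :: real assumes r: "0 < r"
  shows "(\<integral>\<^sup>+ t. ennreal \<bar>phi r t\<bar> \<partial>lborel) = ennreal \<bar>ln r\<bar>"
proof (cases "1 \<le> r")
  case True
  have "ennreal \<bar>phi r t\<bar> = ennreal (phi r t)" for t using T1[OF True, of t] by simp
  then show ?thesis using T2[OF True] True by simp
next
  case False
  then have r1: "r < 1" by simp
  have "ennreal \<bar>phi r t\<bar> = ennreal (- phi r t)" for t using T1'[OF r r1, of t] by simp
  then show ?thesis using T2'[OF r r1] r1 r by simp
qed


definition G :: "real \<Rightarrow> ennreal" where
  "G s = (\<integral>\<^sup>+ w. ennreal (exp (- s * (norm w)\<^sup>2)) \<partial>(lborel :: complex measure))"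

lemma nn_integral_translate:
  fixes c :: complex
  assumes [measurable]: "f \<in> borel_measurable borel"
  shows "(\<integral>\<^sup>+ z. f z \<partial>lborel) = (\<integral>\<^sup>+ z. f (c + z) \<partial>lborel)"
proof -
  have "(\<integral>\<^sup>+ z. f z \<partial>lborel) = (\<integral>\<^sup>+ z. f z \<partial>(distr lborel borel ((+) c)))"
    by (simp add: lborel_distr_plus)
  also have "\<dots> = (\<integral>\<^sup>+ z. f (c + z) \<partial>lborel)"
    by (subst nn_integral_distr) auto
  finally show ?thesis .
qed

lemma real_gauss_fin: "(\<integral>\<^sup>+ (u::real). ennreal (exp (- 1 * u\<^sup>2)) \<partial>lborel) < \<infinity>"
proof -
  have "integrable lborel (\<lambda>x. std_normal_density x * x ^ 0)"
    by (rule integrable_std_normal_moment)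
  then have "(\<integral>\<^sup>+ u. ennreal (std_normal_density u) \<partial>lborel) < \<infinity>"
    by (simp add: integrable_iff_bounded normal_density_nonneg)
  moreover have "(\<integral>\<^sup>+ u. ennreal (sqrt (2 * pi) * std_normal_density u) \<partial>lborel) =
     ennreal (sqrt (2 * pi)) * (\<integral>\<^sup>+ u. ennreal (std_normal_density u) \<partial>lborel)"
    by (simp add: ennreal_mult nn_integral_cmult normal_density_nonneg)
  ultimately have fin: "(\<integral>\<^sup>+ u. ennreal (sqrt (2 * pi) * std_normal_density u) \<partial>lborel) < \<infinity>"
    by (simp add: ennreal_mult_less_top)
  have "(\<integral>\<^sup>+ (u::real). ennreal (exp (- 1 * u\<^sup>2)) \<partial>lborel) \<le> (\<integral>\<^sup>+ u. ennreal (sqrt (2 * pi) * std_normal_density u) \<partial>lborel)"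
  proof (rule nn_integral_mono)
    fix u :: real
    have "exp (- 1 * u\<^sup>2) \<le> exp (- u\<^sup>2 / 2)" by simp
    also have "\<dots> = sqrt (2 * pi) * std_normal_density u" by (simp add: std_normal_density_def)
    finally show "ennreal (exp (- 1 * u\<^sup>2)) \<le> ennreal (sqrt (2 * pi) * std_normal_density u)"
      by (rule ennreal_leI)
  qed
  with fin show ?thesis by (simp add: order_le_less_trans)
qed

lemma G1_prod: "G 1 = (\<integral>\<^sup>+ (u::real). ennreal (exp (- 1 * u\<^sup>2)) \<partial>lborel) * (\<integral>\<^sup>+ (u::real). ennreal (exp (- 1 * u\<^sup>2)) \<partial>lborel)"
proof -
  have "G 1 = (\<integral>\<^sup>+ (w::complex). (\<Prod>b\<in>Basis. ennreal (exp (- 1 * (w \<bullet> b)\<^sup>2))) \<partial>lborel)"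
    unfolding G_def
  proof (rule nn_integral_cong)
    fix w :: complex
    have "(\<Prod>b\<in>Basis. ennreal (exp (- 1 * (w \<bullet> b)\<^sup>2))) = ennreal (exp (- (Re w)\<^sup>2)) * ennreal (exp (- (Im w)\<^sup>2))"
      by (simp add: Basis_complex_def inner_complex_def)
    also have "\<dots> = ennreal (exp (- 1 * (norm w)\<^sup>2))"
      by (simp add: ennreal_mult'[symmetric] cmod_power2 exp_add[symmetric])
    finally show "ennreal (exp (- 1 * (norm w)\<^sup>2)) = (\<Prod>b\<in>Basis. ennreal (exp (- 1 * (w \<bullet> b)\<^sup>2)))" by simp
  qed
  also have "\<dots> = (\<Prod>b\<in>(Basis::complex set). (\<integral>\<^sup>+ (u::real). ennreal (exp (- 1 * u\<^sup>2)) \<partial>lborel))"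
    by (rule nn_integral_lborel_prod) auto
  also have "\<dots> = (\<integral>\<^sup>+ (u::real). ennreal (exp (- 1 * u\<^sup>2)) \<partial>lborel) * (\<integral>\<^sup>+ (u::real). ennreal (exp (- 1 * u\<^sup>2)) \<partial>lborel)"
    by (simp add: Basis_complex_def)
  finally show ?thesis .
qed

lemma G1_fin: "G 1 < \<infinity>"
  unfolding G1_prod using real_gauss_fin by (simp add: ennreal_mult_less_top)

lemma G_pos: "0 < G s"
proof -
  have "G s \<noteq> 0"
  proof
    assume "G s = 0"
    then have "AE w in lborel. ennreal (exp (- s * (norm (w::complex))\<^sup>2)) = 0"
      unfolding G_def by (subst (asm) nn_integral_0_iff_AE) auto
    then have "AE (w::complex) in lborel. False" by simp
    then show False using AE_iff_measurable[of UNIV "lborel :: complex measure" "\<lambda>_. False"] by simp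
  qed
  then show ?thesis by (simp add: zero_less_iff_neq_zero)
qed



lemma nn_integral_complex_scale:
  fixes c :: real and f :: "complex \<Rightarrow> ennreal"
  assumes [measurable]: "f \<in> borel_measurable borel" and c: "c \<noteq> 0"
  shows "(\<integral>\<^sup>+x. f x \<partial>lborel) = ennreal (\<bar>c\<bar> ^ DIM(complex)) * (\<integral>\<^sup>+x. f (0 + c *\<^sub>R x) \<partial>lborel)"
  by (subst lborel_affine[OF c, of 0])
     (simp add: nn_integral_density nn_integral_distr nn_integral_cmult)

lemma G_scale:
  assumes s: "0 < s"
  shows "G s = ennreal (1 / s) * G 1"
proof -
  define c where "c = 1 / sqrt s"
  have c: "c \<noteq> 0" using s by (simp add: c_def)
  have cs: "s * c\<^sup>2 = 1" using s by (simp add: c_def power_divide)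
  have "G s = ennreal (\<bar>c\<bar> ^ DIM(complex)) * (\<integral>\<^sup>+x. ennreal (exp (- s * (norm (0 + c *\<^sub>R (x::complex)))\<^sup>2)) \<partial>lborel)"
    unfolding G_def by (rule nn_integral_complex_scale[OF _ c]) measurable
  also have "(\<lambda>x::complex. ennreal (exp (- s * (norm (0 + c *\<^sub>R x))\<^sup>2))) = (\<lambda>x. ennreal (exp (- 1 * (norm x)\<^sup>2)))"
  proof
    fix x :: complex
    have "s * (norm (0 + c *\<^sub>R x))\<^sup>2 = (s * c\<^sup>2) * (norm x)\<^sup>2"
      by (simp add: power_mult_distrib)
    then show "ennreal (exp (- s * (norm (0 + c *\<^sub>R x))\<^sup>2)) = ennreal (exp (- 1 * (norm x)\<^sup>2))"
      using cs by simp
  qed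
  also have "\<bar>c\<bar> ^ DIM(complex) = 1 / s" using s by (simp add: c_def power_divide)
  finally show ?thesis unfolding G_def by simp
qed

lemma parallelogram_complex: "(norm (a + b :: complex))\<^sup>2 + (norm (a - b))\<^sup>2 = 2 * (norm a)\<^sup>2 + 2 * (norm b)\<^sup>2"
  by (simp only: cmod_power2) (simp add: power2_eq_square algebra_simps)

lemma gauss_conv:
  fixes x y :: complex and t :: real
  assumes t: "0 < t"
  shows "(\<integral>\<^sup>+ z. ennreal (exp (- 2 * t * (norm (x - z))\<^sup>2) * exp (- 2 * t * (norm (y - z))\<^sup>2)) \<partial>lborel)
    = ennreal (exp (- t * (norm (x - y))\<^sup>2)) * G (4 * t)"
proof -
  define m where "m = (x + y) / 2"
  define d where "d = (x - y) / 2"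
  have xm: "x - (m + w) = d - w" and ym: "y - (m + w) = - (d + w)" for w
    by (simp_all add: m_def d_def field_simps)
  have "(\<integral>\<^sup>+ z. ennreal (exp (- 2 * t * (norm (x - z))\<^sup>2) * exp (- 2 * t * (norm (y - z))\<^sup>2)) \<partial>lborel)
    = (\<integral>\<^sup>+ w. ennreal (exp (- 2 * t * (norm (x - (m + w)))\<^sup>2) * exp (- 2 * t * (norm (y - (m + w)))\<^sup>2)) \<partial>lborel)"
    by (rule nn_integral_translate) measurable
  also have "\<dots> = (\<integral>\<^sup>+ w. ennreal (exp (- t * (norm (x - y))\<^sup>2)) * ennreal (exp (- (4 * t) * (norm (w::complex))\<^sup>2)) \<partial>lborel)"
  proof (rule nn_integral_cong)
    fix w :: complex
    have n: "(norm (d - w))\<^sup>2 + (norm (d + w))\<^sup>2 = 2 * (norm d)\<^sup>2 + 2 * (norm w)\<^sup>2"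
      using parallelogram_complex[of d w] by (simp add: add.commute)
    have dd: "4 * (norm d)\<^sup>2 = (norm (x - y))\<^sup>2"
      by (simp add: d_def norm_divide power_divide)
    have "exp (- 2 * t * (norm (x - (m + w)))\<^sup>2) * exp (- 2 * t * (norm (y - (m + w)))\<^sup>2)
       = exp (- 2 * t * ((norm (d - w))\<^sup>2 + (norm (d + w))\<^sup>2))"
      unfolding xm ym by (simp add: exp_add[symmetric] algebra_simps norm_minus_commute)
    also have "\<dots> = exp (- t * (4 * (norm d)\<^sup>2) + (- (4 * t) * (norm w)\<^sup>2))"
      unfolding n by (simp add: algebra_simps)
    also have "\<dots> = exp (- t * (norm (x - y))\<^sup>2) * exp (- (4 * t) * (norm w)\<^sup>2)"
      unfolding dd exp_add by simp
    finally show "ennreal (exp (- 2 * t * (norm (x - (m + w)))\<^sup>2) * exp (- 2 * t * (norm (y - (m + w)))\<^sup>2)) =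
        ennreal (exp (- t * (norm (x - y))\<^sup>2)) * ennreal (exp (- (4 * t) * (norm w)\<^sup>2))"
      by (simp add: ennreal_mult)
  qed
  also have "\<dots> = ennreal (exp (- t * (norm (x - y))\<^sup>2)) * G (4 * t)"
    unfolding G_def by (rule nn_integral_cmult) measurable
  finally show ?thesis .
qed



lemma integrable_prod_mult:
  fixes g h :: "'a::euclidean_space \<Rightarrow> real"
  assumes g: "integrable lborel g" and h: "integrable lborel h"
  shows "integrable (lborel \<Otimes>\<^sub>M lborel) (\<lambda>p. g (fst p) * h (snd p))"
    and "(\<integral>p. g (fst p) * h (snd p) \<partial>(lborel \<Otimes>\<^sub>M lborel)) = (\<integral>x. g x \<partial>lborel) * (\<integral>x. h x \<partial>lborel)"
proof -
  have [measurable]: "g \<in> borel_measurable lborel" "h \<in> borel_measurable lborel"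
    using g h by auto
  have "(\<integral>\<^sup>+ p. ennreal (norm (g (fst p) * h (snd p))) \<partial>(lborel \<Otimes>\<^sub>M lborel))
      = (\<integral>\<^sup>+ x. \<integral>\<^sup>+ y. ennreal (norm (g x)) * ennreal (norm (h y)) \<partial>lborel \<partial>lborel)"
    by (subst lborel.nn_integral_fst[symmetric]) (auto simp: abs_mult ennreal_mult)
  also have "\<dots> = (\<integral>\<^sup>+ x. ennreal (norm (g x)) \<partial>lborel) * (\<integral>\<^sup>+ y. ennreal (norm (h y)) \<partial>lborel)"
    by (simp add: nn_integral_cmult nn_integral_multc)
  also have "\<dots> < \<infinity>" using g h by (simp add: integrable_iff_bounded ennreal_mult_less_top)
  finally show int: "integrable (lborel \<Otimes>\<^sub>M lborel) (\<lambda>p. g (fst p) * h (snd p))"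
    by (intro integrableI_bounded) auto
  have "(\<integral>p. g (fst p) * h (snd p) \<partial>(lborel \<Otimes>\<^sub>M lborel)) = (\<integral>x. \<integral>y. g x * h y \<partial>lborel \<partial>lborel)"
    using lborel_pair.integral_fst'[OF int] by simp
  also have "\<dots> = (\<integral>x. g x * (\<integral>y. h y \<partial>lborel) \<partial>lborel)" by simp
  also have "\<dots> = (\<integral>x. g x \<partial>lborel) * (\<integral>x. h x \<partial>lborel)" by simp
  finally show "(\<integral>p. g (fst p) * h (snd p) \<partial>(lborel \<Otimes>\<^sub>M lborel)) = (\<integral>x. g x \<partial>lborel) * (\<integral>x. h x \<partial>lborel)" .
qed



interpretation PL: pair_sigma_finite "lborel \<Otimes>\<^sub>M lborel :: (complex \<times> complex) measure" "lborel :: complex measure"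
  unfolding pair_sigma_finite_def lborel_prod by (auto intro: sigma_finite_lborel)

definition g1 :: real where "g1 = enn2real (G 1)"

lemma g1_pos: "0 < g1"
  using G1_fin G_pos[of 1] unfolding g1_def by (simp add: enn2real_positive_iff)

lemma G4: assumes "0 < t" shows "G (4 * t) = ennreal (g1 / (4 * t))"
proof -
  have "G 1 = ennreal g1" using G1_fin unfolding g1_def by simp
  then show ?thesis using G_scale[of "4 * t"] assms g1_pos
    by (simp add: ennreal_mult'[symmetric] divide_simps)
qed

lemma kk_int:
  fixes x y :: complex assumes t: "0 < t"
  shows "has_bochner_integral lborel (\<lambda>z. exp (- 2 * t * (norm (x - z))\<^sup>2) * exp (- 2 * t * (norm (y - z))\<^sup>2))
     (exp (- t * (norm (x - y))\<^sup>2) * (g1 / (4 * t)))"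
proof (rule has_bochner_integral_nn_integral)
  show "(\<integral>\<^sup>+ z. ennreal (exp (- 2 * t * (norm (x - z))\<^sup>2) * exp (- 2 * t * (norm (y - z))\<^sup>2)) \<partial>lborel)
    = ennreal (exp (- t * (norm (x - y))\<^sup>2) * (g1 / (4 * t)))"
    unfolding gauss_conv[OF t] G4[OF t] using t g1_pos by (simp add: ennreal_mult'[symmetric])
qed (use t g1_pos in auto)

lemma gauss_pd:
  fixes f :: "complex \<Rightarrow> real"
  assumes f: "integrable lborel f" and t: "0 < t"
  shows "0 \<le> (\<integral>p. exp (- t * (norm (fst p - snd p))\<^sup>2) * (f (fst p) * f (snd p)) \<partial>(lborel \<Otimes>\<^sub>M lborel))"
proof -
  have fm[measurable]: "f \<in> borel_measurable lborel" using f by auto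
  define c where "c = g1 / (4 * t)"
  have c: "0 < c" using g1_pos t by (simp add: c_def)
  define k where "k z x = exp (- 2 * t * (norm (x - z))\<^sup>2)" for z x :: complex
  have km[measurable]: "(\<lambda>p. k (h1 p) (h2 p)) \<in> borel_measurable M"
    if [measurable]: "h1 \<in> borel_measurable M" "h2 \<in> borel_measurable M" for h1 h2 and M :: "'b measure"
    unfolding k_def by measurable
  have k01: "0 \<le> k z x" "k z x \<le> 1" for z x using t by (auto simp: k_def)
  define F where "F q = k (snd q) (fst (fst q)) * k (snd q) (snd (fst q)) * (f (fst (fst q)) * f (snd (fst q)))"
    for q :: "(complex \<times> complex) \<times> complex"
  have Fm[measurable]: "F \<in> borel_measurable ((lborel \<Otimes>\<^sub>M lborel) \<Otimes>\<^sub>M lborel)"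
    unfolding F_def by measurable
  have ff: "integrable (lborel \<Otimes>\<^sub>M lborel) (\<lambda>p. \<bar>f (fst p)\<bar> * \<bar>f (snd p)\<bar>)"
    using integrable_prod_mult(1)[of "\<lambda>x. \<bar>f x\<bar>" "\<lambda>x. \<bar>f x\<bar>"] f by auto
  have inner_z: "(\<integral>z. F (p, z) \<partial>lborel) = c * (exp (- t * (norm (fst p - snd p))\<^sup>2) * (f (fst p) * f (snd p)))" for p
  proof -
    have "(\<integral>z. F (p, z) \<partial>lborel) = (\<integral>z. k z (fst p) * k z (snd p) \<partial>lborel) * (f (fst p) * f (snd p))"
      unfolding F_def by simp
    also have "(\<integral>z. k z (fst p) * k z (snd p) \<partial>lborel) = exp (- t * (norm (fst p - snd p))\<^sup>2) * c"
      unfolding k_def c_def using has_bochner_integral_integral_eq[OF kk_int[OF t]] by simp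
    finally show ?thesis by simp
  qed
  have absF: "(\<integral>\<^sup>+ q. ennreal (norm (F q)) \<partial>((lborel \<Otimes>\<^sub>M lborel) \<Otimes>\<^sub>M lborel)) < \<infinity>"
  proof -
    have "(\<integral>\<^sup>+ q. ennreal (norm (F q)) \<partial>((lborel \<Otimes>\<^sub>M lborel) \<Otimes>\<^sub>M lborel))
        = (\<integral>\<^sup>+ p. \<integral>\<^sup>+ z. ennreal (norm (F (p, z))) \<partial>lborel \<partial>(lborel \<Otimes>\<^sub>M lborel))"
      by (subst lborel.nn_integral_fst[symmetric]) auto
    also have "\<dots> = (\<integral>\<^sup>+ p. ennreal (c * (exp (- t * (norm (fst p - snd p))\<^sup>2) * (\<bar>f (fst p)\<bar> * \<bar>f (snd p)\<bar>))) \<partial>(lborel \<Otimes>\<^sub>M lborel))"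
    proof (rule nn_integral_cong)
      fix p :: "complex \<times> complex"
      have "(\<lambda>z. norm (F (p, z))) = (\<lambda>z. k z (fst p) * k z (snd p) * (\<bar>f (fst p)\<bar> * \<bar>f (snd p)\<bar>))"
        unfolding F_def using k01 by (auto simp: abs_mult)
      moreover have "has_bochner_integral lborel (\<lambda>z. k z (fst p) * k z (snd p) * (\<bar>f (fst p)\<bar> * \<bar>f (snd p)\<bar>))
          (exp (- t * (norm (fst p - snd p))\<^sup>2) * c * (\<bar>f (fst p)\<bar> * \<bar>f (snd p)\<bar>))"
        unfolding k_def c_def by (intro has_bochner_integral_mult_left kk_int t)
      ultimately have "has_bochner_integral lborel (\<lambda>z. norm (F (p, z)))
          (c * (exp (- t * (norm (fst p - snd p))\<^sup>2) * (\<bar>f (fst p)\<bar> * \<bar>f (snd p)\<bar>)))"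
        by (simp add: mult_ac)
      then show "(\<integral>\<^sup>+ z. ennreal (norm (F (p, z))) \<partial>lborel) =
          ennreal (c * (exp (- t * (norm (fst p - snd p))\<^sup>2) * (\<bar>f (fst p)\<bar> * \<bar>f (snd p)\<bar>)))"
        by (subst nn_integral_eq_integral) (auto simp: has_bochner_integral_iff)
    qed
    also have "\<dots> \<le> (\<integral>\<^sup>+ p. ennreal (c * (\<bar>f (fst p)\<bar> * \<bar>f (snd p)\<bar>)) \<partial>(lborel \<Otimes>\<^sub>M lborel))"
      by (intro nn_integral_mono ennreal_leI) (use c t in \<open>auto intro!: mult_left_le_one_le mult_nonneg_nonneg\<close>)
    also have "\<dots> < \<infinity>"
    proof -
      have "integrable (lborel \<Otimes>\<^sub>M lborel) (\<lambda>p. c * (\<bar>f (fst p)\<bar> * \<bar>f (snd p)\<bar>))"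
        using ff by simp
      from this[unfolded integrable_iff_bounded]
      have "(\<integral>\<^sup>+ p. ennreal (norm (c * (\<bar>f (fst p)\<bar> * \<bar>f (snd p)\<bar>))) \<partial>(lborel \<Otimes>\<^sub>M lborel)) < \<infinity>" by blast
      moreover have "\<And>p. norm (c * (\<bar>f (fst p)\<bar> * \<bar>f (snd p)\<bar>)) = c * (\<bar>f (fst p)\<bar> * \<bar>f (snd p)\<bar>)"
        using c by (simp add: abs_mult)
      ultimately show ?thesis by simp
    qed
    finally show ?thesis .
  qed
  have intF: "integrable ((lborel \<Otimes>\<^sub>M lborel) \<Otimes>\<^sub>M lborel) F"
    using absF by (intro integrableI_bounded) auto
  have "(\<integral>q. F q \<partial>((lborel \<Otimes>\<^sub>M lborel) \<Otimes>\<^sub>M lborel)) = (\<integral>p. \<integral>z. F (p, z) \<partial>lborel \<partial>(lborel \<Otimes>\<^sub>M lborel))"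
    using PL.integral_fst'[OF intF] by simp
  also have "\<dots> = c * (\<integral>p. exp (- t * (norm (fst p - snd p))\<^sup>2) * (f (fst p) * f (snd p)) \<partial>(lborel \<Otimes>\<^sub>M lborel))"
    unfolding inner_z by simp
  finally have e1: "(\<integral>q. F q \<partial>((lborel \<Otimes>\<^sub>M lborel) \<Otimes>\<^sub>M lborel)) = c * (\<integral>p. exp (- t * (norm (fst p - snd p))\<^sup>2) * (f (fst p) * f (snd p)) \<partial>(lborel \<Otimes>\<^sub>M lborel))" .
  have cp: "(\<lambda>(p, z). F (p, z)) = F" by auto
  have "(\<integral>z. \<integral>p. F (p, z) \<partial>(lborel \<Otimes>\<^sub>M lborel) \<partial>lborel) = (\<integral>q. F q \<partial>((lborel \<Otimes>\<^sub>M lborel) \<Otimes>\<^sub>M lborel))"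
    using PL.integral_snd[of "\<lambda>p z. F (p, z)"] intF unfolding cp by simp
  moreover have "0 \<le> (\<integral>z. \<integral>p. F (p, z) \<partial>(lborel \<Otimes>\<^sub>M lborel) \<partial>lborel)"
  proof (rule integral_nonneg_AE, rule AE_I2)
    fix z :: complex
    have gi: "integrable lborel (\<lambda>x. k z x * f x)"
      by (rule Bochner_Integration.integrable_bound[OF f]) (use k01 in \<open>auto simp: abs_mult intro!: mult_left_le_one_le\<close>)
    have "(\<integral>p. F (p, z) \<partial>(lborel \<Otimes>\<^sub>M lborel)) = (\<integral>p. (k z (fst p) * f (fst p)) * (k z (snd p) * f (snd p)) \<partial>(lborel \<Otimes>\<^sub>M lborel))"
      unfolding F_def by (simp add: mult_ac)
    also have "\<dots> = (\<integral>x. k z x * f x \<partial>lborel) * (\<integral>x. k z x * f x \<partial>lborel)"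
      by (rule integrable_prod_mult(2)[OF gi gi])
    finally show "0 \<le> (\<integral>p. F (p, z) \<partial>(lborel \<Otimes>\<^sub>M lborel))" by simp
  qed
  ultimately have "0 \<le> c * (\<integral>p. exp (- t * (norm (fst p - snd p))\<^sup>2) * (f (fst p) * f (snd p)) \<partial>(lborel \<Otimes>\<^sub>M lborel))"
    using e1 by simp
  then show ?thesis using c by (simp add: zero_le_mult_iff)
qed



interpretation PR: pair_sigma_finite "lborel \<Otimes>\<^sub>M lborel :: (complex \<times> complex) measure" "lborel :: real measure"
  unfolding pair_sigma_finite_def lborel_prod by (auto intro: sigma_finite_lborel)

lemma AE_offdiag: "AE p in (lborel \<Otimes>\<^sub>M lborel :: (complex \<times> complex) measure). fst p \<noteq> snd p"
proof (rule lborel_pair.AE_pair_measure)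
  show "{x \<in> space (lborel \<Otimes>\<^sub>M lborel). fst x \<noteq> snd x} \<in> sets (lborel \<Otimes>\<^sub>M (lborel :: complex measure))"
    by measurable
  show "AE x in lborel. AE y in lborel. fst (x, y) \<noteq> snd (x::complex, y::complex)"
    using AE_lborel_singleton by (auto simp: eq_commute)
qed

lemma log_pd:
  fixes f :: "complex \<Rightarrow> real"
  assumes f: "integrable lborel f" and f0: "(\<integral>x. f x \<partial>lborel) = 0"
    and E: "integrable (lborel \<Otimes>\<^sub>M lborel) (\<lambda>p. ln (norm (fst p - snd p)) * (f (fst p) * f (snd p)))"
  shows "(\<integral>p. ln (norm (fst p - snd p)) * (f (fst p) * f (snd p)) \<partial>(lborel \<Otimes>\<^sub>M lborel)) \<le> 0"
proof -
  have fm[measurable]: "f \<in> borel_measurable lborel" using f by auto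
  define \<Phi> where "\<Phi> q = phi (norm (fst (fst q) - snd (fst q))) (snd q) * (f (fst (fst q)) * f (snd (fst q)))"
    for q :: "(complex \<times> complex) \<times> real"
  have \<Phi>m[measurable]: "\<Phi> \<in> borel_measurable ((lborel \<Otimes>\<^sub>M lborel) \<Otimes>\<^sub>M lborel)"
    unfolding \<Phi>_def by measurable
  have "(\<integral>\<^sup>+ q. ennreal (norm (\<Phi> q)) \<partial>((lborel \<Otimes>\<^sub>M lborel) \<Otimes>\<^sub>M lborel))
      = (\<integral>\<^sup>+ p. \<integral>\<^sup>+ t. ennreal (norm (\<Phi> (p, t))) \<partial>lborel \<partial>(lborel \<Otimes>\<^sub>M lborel))"
    by (subst lborel.nn_integral_fst[symmetric]) auto
  also have "\<dots> = (\<integral>\<^sup>+ p. ennreal (norm (ln (norm (fst p - snd p)) * (f (fst p) * f (snd p)))) \<partial>(lborel \<Otimes>\<^sub>M lborel))"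
  proof (rule nn_integral_cong_AE)
    show "AE p in lborel \<Otimes>\<^sub>M lborel. (\<integral>\<^sup>+ t. ennreal (norm (\<Phi> (p, t))) \<partial>lborel) =
        ennreal (norm (ln (norm (fst p - snd p)) * (f (fst p) * f (snd p))))"
      using AE_offdiag
    proof eventually_elim
      case (elim p)
      then have r: "0 < norm (fst p - snd p)" by simp
      have "(\<integral>\<^sup>+ t. ennreal (norm (\<Phi> (p, t))) \<partial>lborel) =
          (\<integral>\<^sup>+ t. ennreal \<bar>phi (norm (fst p - snd p)) t\<bar> * ennreal \<bar>f (fst p) * f (snd p)\<bar> \<partial>lborel)"
        unfolding \<Phi>_def by (simp add: abs_mult ennreal_mult)
      also have "\<dots> = ennreal \<bar>ln (norm (fst p - snd p))\<bar> * ennreal \<bar>f (fst p) * f (snd p)\<bar>"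
        by (subst nn_integral_multc) (auto simp: phi_abs_int[OF r])
      finally show ?case by (simp add: abs_mult ennreal_mult)
    qed
  qed
  also have "\<dots> < \<infinity>" using E by (simp add: integrable_iff_bounded)
  finally have int\<Phi>: "integrable ((lborel \<Otimes>\<^sub>M lborel) \<Otimes>\<^sub>M lborel) \<Phi>"
    by (intro integrableI_bounded) auto
  have "(\<integral>q. \<Phi> q \<partial>((lborel \<Otimes>\<^sub>M lborel) \<Otimes>\<^sub>M lborel)) = (\<integral>p. \<integral>t. \<Phi> (p, t) \<partial>lborel \<partial>(lborel \<Otimes>\<^sub>M lborel))"
    using PR.integral_fst'[OF int\<Phi>] by simp
  also have "\<dots> = (\<integral>p. ln (norm (fst p - snd p)) * (f (fst p) * f (snd p)) \<partial>(lborel \<Otimes>\<^sub>M lborel))"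
  proof (rule integral_cong_AE)
    show "AE p in lborel \<Otimes>\<^sub>M lborel. (\<integral>t. \<Phi> (p, t) \<partial>lborel) = ln (norm (fst p - snd p)) * (f (fst p) * f (snd p))"
      using AE_offdiag
    proof eventually_elim
      case (elim p)
      then have r: "0 < norm (fst p - snd p)" by simp
      show ?case unfolding \<Phi>_def using has_bochner_integral_integral_eq[OF phi_int[OF r]] by simp
    qed
  qed auto
  finally have eJ: "(\<integral>q. \<Phi> q \<partial>((lborel \<Otimes>\<^sub>M lborel) \<Otimes>\<^sub>M lborel)) = (\<integral>p. ln (norm (fst p - snd p)) * (f (fst p) * f (snd p)) \<partial>(lborel \<Otimes>\<^sub>M lborel))" .
  have cp: "(\<lambda>(p, t). \<Phi> (p, t)) = \<Phi>" by auto
  have eT: "(\<integral>t. \<integral>p. \<Phi> (p, t) \<partial>(lborel \<Otimes>\<^sub>M lborel) \<partial>lborel) = (\<integral>q. \<Phi> q \<partial>((lborel \<Otimes>\<^sub>M lborel) \<Otimes>\<^sub>M lborel))"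
    using PR.integral_snd[of "\<lambda>p t. \<Phi> (p, t)"] int\<Phi> unfolding cp by simp
  have ffi: "integrable (lborel \<Otimes>\<^sub>M lborel) (\<lambda>p. f (fst p) * f (snd p))"
    and ff0: "(\<integral>p. f (fst p) * f (snd p) \<partial>(lborel \<Otimes>\<^sub>M lborel)) = 0"
    using integrable_prod_mult[OF f f] f0 by auto
  have "(\<integral>t. \<integral>p. \<Phi> (p, t) \<partial>(lborel \<Otimes>\<^sub>M lborel) \<partial>lborel) \<le> 0"
  proof -
    have "0 \<le> (\<integral>t. - (\<integral>p. \<Phi> (p, t) \<partial>(lborel \<Otimes>\<^sub>M lborel)) \<partial>lborel)"
    proof (rule integral_nonneg_AE, rule AE_I2)
      fix t :: real
      show "0 \<le> - (\<integral>p. \<Phi> (p, t) \<partial>(lborel \<Otimes>\<^sub>M lborel))"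
      proof (cases "0 < t")
        case False
        then have "\<And>p. \<Phi> (p, t) = 0" unfolding \<Phi>_def phi_def by (auto simp: indicator_def)
        then show ?thesis by simp
      next
        case True
        have ei: "integrable (lborel \<Otimes>\<^sub>M lborel) (\<lambda>p. exp (- t * (norm (fst p - snd p))\<^sup>2) * (f (fst p) * f (snd p)))"
          by (rule Bochner_Integration.integrable_bound[OF ffi]) (use True in \<open>auto simp: abs_mult intro!: mult_left_le_one_le\<close>)
        have "(\<lambda>p. \<Phi> (p, t)) = (\<lambda>p. (exp (- t) / (2 * t)) * (f (fst p) * f (snd p)) - (1 / (2 * t)) * (exp (- t * (norm (fst p - snd p))\<^sup>2) * (f (fst p) * f (snd p))))"
          using True unfolding \<Phi>_def phi_def by (auto simp: field_simps)
        then have "(\<integral>p. \<Phi> (p, t) \<partial>(lborel \<Otimes>\<^sub>M lborel)) = - (1 / (2 * t)) * (\<integral>p. exp (- t * (norm (fst p - snd p))\<^sup>2) * (f (fst p) * f (snd p)) \<partial>(lborel \<Otimes>\<^sub>M lborel))"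
          using ffi ei ff0 by simp
        moreover have "0 \<le> (\<integral>p. exp (- t * (norm (fst p - snd p))\<^sup>2) * (f (fst p) * f (snd p)) \<partial>(lborel \<Otimes>\<^sub>M lborel))"
          by (rule gauss_pd[OF f True])
        ultimately show ?thesis using True by simp
      qed
    qed
    then show ?thesis by simp
  qed
  then show ?thesis using eT eJ by simp
qed



definition Kf :: "complex \<Rightarrow> complex \<Rightarrow> ennreal" where
  "Kf x y = (\<integral>\<^sup>+ t. ennreal (exp (- t * (norm (x - y))\<^sup>2) / (2 * t)) * indicator {1..} t \<partial>lborel)"

lemma Kf_measurable[measurable]:
  assumes [measurable]: "h1 \<in> borel_measurable M" "h2 \<in> borel_measurable M"
  shows "(\<lambda>p. Kf (h1 p) (h2 p)) \<in> borel_measurable M"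
  unfolding Kf_def by measurable

lemma inv_sq_int: "(\<integral>\<^sup>+ t. ennreal (1 / (2 * t\<^sup>2)) * indicator {1..} t \<partial>lborel) = ennreal (1 / 2)"
proof -
  have "(\<integral>\<^sup>+ t. ennreal (1 / (2 * t\<^sup>2)) * indicator {1..} t \<partial>lborel) = ennreal (0 - (- 1 / (2 * (1::real))))"
  proof (rule nn_integral_FTC_atLeast[where F = "\<lambda>t. - 1 / (2 * t)"])
    show "(\<lambda>t::real. 1 / (2 * t\<^sup>2)) \<in> borel_measurable borel" by measurable
    fix x :: real
    show "0 \<le> 1 / (2 * x\<^sup>2)" by simp
    assume x: "1 \<le> x"
    then show "DERIV (\<lambda>t. - 1 / (2 * t)) x :> 1 / (2 * x\<^sup>2)"
      by (auto intro!: derivative_eq_intros simp: field_simps power2_eq_square)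
  next
    show "((\<lambda>t::real. - 1 / (2 * t)) \<longlongrightarrow> 0) at_top" by real_asymp
  qed
  then show ?thesis by simp
qed

lemma Kf_le:
  fixes x y :: complex assumes xy: "x \<noteq> y"
  shows "Kf x y \<le> ennreal (\<bar>ln (norm (x - y))\<bar> + 1 / 2)"
proof -
  define r where "r = norm (x - y)"
  have r: "0 < r" using xy by (simp add: r_def)
  have "Kf x y \<le> (\<integral>\<^sup>+ t. ennreal \<bar>phi r t\<bar> + ennreal (1 / (2 * t\<^sup>2)) * indicator {1..} t \<partial>lborel)"
    unfolding Kf_def r_def[symmetric]
  proof (rule nn_integral_mono)
    fix t :: real
    show "ennreal (exp (- t * r\<^sup>2) / (2 * t)) * indicator {1..} t \<le> ennreal \<bar>phi r t\<bar> + ennreal (1 / (2 * t\<^sup>2)) * indicator {1..} t"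
    proof (cases "1 \<le> t")
      case True
      have t0: "0 < t" using True by simp
      have "exp (- t) * t \<le> 1"
      proof -
        have "t \<le> exp t" using exp_ge_add_one_self[of t] by linarith
        then show ?thesis using t0 by (simp add: exp_minus field_simps)
      qed
      then have e: "exp (- t) / (2 * t) \<le> 1 / (2 * t\<^sup>2)" using t0 by (simp add: field_simps power2_eq_square)
      have "exp (- t * r\<^sup>2) / (2 * t) \<le> \<bar>phi r t\<bar> + exp (- t) / (2 * t)"
      proof -
        have "exp (- t * r\<^sup>2) \<le> \<bar>exp (- t) - exp (- t * r\<^sup>2)\<bar> + exp (- t)" by simp
        then have "exp (- t * r\<^sup>2) / (2 * t) \<le> (\<bar>exp (- t) - exp (- t * r\<^sup>2)\<bar> + exp (- t)) / (2 * t)"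
          using t0 by (intro divide_right_mono) auto
        also have "\<dots> = \<bar>phi r t\<bar> + exp (- t) / (2 * t)"
          using t0 by (simp add: phi_def add_divide_distrib abs_divide)
        finally show ?thesis .
      qed
      also have "\<dots> \<le> \<bar>phi r t\<bar> + 1 / (2 * t\<^sup>2)" using e by simp
      finally show ?thesis using True by (simp add: ennreal_plus[symmetric] del: ennreal_plus)
    qed simp
  qed
  also have "\<dots> = (\<integral>\<^sup>+ t. ennreal \<bar>phi r t\<bar> \<partial>lborel) + (\<integral>\<^sup>+ t. ennreal (1 / (2 * t\<^sup>2)) * indicator {1..} t \<partial>lborel)"
    by (rule nn_integral_add) auto
  also have "\<dots> = ennreal (\<bar>ln r\<bar> + 1 / 2)"
    unfolding phi_abs_int[OF r] inv_sq_int by (simp add: ennreal_plus)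
  finally show ?thesis by (simp add: r_def)
qed

lemma mphi_le:
  fixes r t :: real assumes r: "0 < r" "r < 1"
  shows "ennreal (- phi r t) \<le> ennreal (1 / 2) * indicator {0..1} t + ennreal (exp (- t * r\<^sup>2) / (2 * t)) * indicator {1..} t"
proof (cases "0 < t")
  case False
  then have "phi r t = 0" by (auto simp: phi_def indicator_def)
  then show ?thesis by simp
next
  case True
  have mp: "- phi r t = (exp (- t * r\<^sup>2) - exp (- t)) / (2 * t)"
    using True unfolding phi_def by (simp add: divide_simps)
  show ?thesis
  proof (cases "t \<le> 1")
    case True
    have "exp (- t * r\<^sup>2) \<le> 1" using \<open>0 < t\<close> by simp
    moreover have "1 - exp (- t) \<le> t" using exp_ge_add_one_self[of "- t"] by simp
    ultimately have "exp (- t * r\<^sup>2) - exp (- t) \<le> t" by linarith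
    then have "- phi r t \<le> t / (2 * t)" unfolding mp using \<open>0 < t\<close>
      by (intro divide_right_mono) auto
    also have "\<dots> = 1 / 2" using \<open>0 < t\<close> by simp
    finally have "ennreal (- phi r t) \<le> ennreal (1 / 2)" by (rule ennreal_leI)
    then show ?thesis using True \<open>0 < t\<close> by (simp add: add_increasing2)
  next
    case False
    have "- phi r t \<le> exp (- t * r\<^sup>2) / (2 * t)" unfolding mp using \<open>0 < t\<close>
      by (intro divide_right_mono) auto
    then have "ennreal (- phi r t) \<le> ennreal (exp (- t * r\<^sup>2) / (2 * t))" by (rule ennreal_leI)
    then show ?thesis using False by (simp add: add_increasing)
  qed
qed

lemma log_le_Kf:
  fixes x y :: complex assumes xy: "x \<noteq> y"
  shows "ennreal \<bar>ln (norm (x - y))\<bar> \<le> ennreal (ln (1 + norm x) + ln (1 + norm y) + 1 / 2) + Kf x y"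
proof -
  define r where "r = norm (x - y)"
  have r: "0 < r" using xy by (simp add: r_def)
  show ?thesis
  proof (cases "1 \<le> r")
    case True
    have "r \<le> norm x + norm y" unfolding r_def by (rule norm_triangle_ineq4)
    also have "\<dots> \<le> (1 + norm x) * (1 + norm y)" by (simp add: algebra_simps)
    finally have "ln r \<le> ln ((1 + norm x) * (1 + norm y))" using r by simp
    also have "\<dots> = ln (1 + norm x) + ln (1 + norm y)" using ln_mult[of "1 + norm x" "1 + norm y"] add_pos_nonneg[of 1 "norm x"] add_pos_nonneg[of 1 "norm y"] by simp
    finally have "\<bar>ln r\<bar> \<le> ln (1 + norm x) + ln (1 + norm y) + 1 / 2" using True by simp
    then have "ennreal \<bar>ln r\<bar> \<le> ennreal (ln (1 + norm x) + ln (1 + norm y) + 1 / 2)" by (rule ennreal_leI)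
    then show ?thesis unfolding r_def by (simp add: add_increasing2)
  next
    case False
    then have r1: "r < 1" by simp
    have "ennreal \<bar>ln r\<bar> = (\<integral>\<^sup>+ t. ennreal (- phi r t) \<partial>lborel)"
      using T2'[OF r r1] r1 r by simp
    also have "\<dots> \<le> (\<integral>\<^sup>+ t. ennreal (1 / 2) * indicator {0..1} t + ennreal (exp (- t * r\<^sup>2) / (2 * t)) * indicator {1..} t \<partial>lborel)"
      by (intro nn_integral_mono mphi_le r r1)
    also have "\<dots> = ennreal (1 / 2) + Kf x y"
      by (subst nn_integral_add) (auto simp: Kf_def r_def nn_integral_cmult_indicator)
    also have "\<dots> \<le> ennreal (ln (1 + norm x) + ln (1 + norm y) + 1 / 2) + Kf x y"
      by (intro add_mono ennreal_leI order_refl) auto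
    finally show ?thesis by (simp add: r_def)
  qed
qed



definition kk :: "real \<Rightarrow> complex \<Rightarrow> complex \<Rightarrow> ennreal" where
  "kk t x z = ennreal (exp (- 2 * t * (norm (x - z))\<^sup>2))"

lemma kk_measurable[measurable]:
  assumes [measurable]: "h1 \<in> borel_measurable M" "h2 \<in> borel_measurable M" "h3 \<in> borel_measurable M"
  shows "(\<lambda>p. kk (h1 p) (h2 p) (h3 p)) \<in> borel_measurable M"
  unfolding kk_def by measurable

lemma Kf_rep:
  "Kf x y = ennreal (2 / g1) * (\<integral>\<^sup>+ t. indicator {1..} t * (\<integral>\<^sup>+ z. kk t x z * kk t y z \<partial>lborel) \<partial>lborel)"
proof -
  have "Kf x y = (\<integral>\<^sup>+ t. ennreal (2 / g1) * (indicator {1..} t * (\<integral>\<^sup>+ z. kk t x z * kk t y z \<partial>lborel)) \<partial>lborel)"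
    unfolding Kf_def
  proof (rule nn_integral_cong)
    fix t :: real
    show "ennreal (exp (- t * (norm (x - y))\<^sup>2) / (2 * t)) * indicator {1..} t =
        ennreal (2 / g1) * (indicator {1..} t * (\<integral>\<^sup>+ z. kk t x z * kk t y z \<partial>lborel))"
    proof (cases "1 \<le> t")
      case True
      then have t: "0 < t" by simp
      have "(\<integral>\<^sup>+ z. kk t x z * kk t y z \<partial>lborel) = ennreal (exp (- t * (norm (x - y))\<^sup>2)) * ennreal (g1 / (4 * t))"
        unfolding kk_def using gauss_conv[OF t, of x y] G4[OF t] by (simp add: ennreal_mult'[symmetric])
      then have "ennreal (2 / g1) * (\<integral>\<^sup>+ z. kk t x z * kk t y z \<partial>lborel) = ennreal (2 / g1 * (exp (- t * (norm (x - y))\<^sup>2) * (g1 / (4 * t))))"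
        using t g1_pos by (simp add: ennreal_mult'[symmetric])
      also have "2 / g1 * (exp (- t * (norm (x - y))\<^sup>2) * (g1 / (4 * t))) = exp (- t * (norm (x - y))\<^sup>2) / (2 * t)"
        using g1_pos t by (simp add: field_simps)
      finally show ?thesis using True by simp
    qed simp
  qed
  also have "\<dots> = ennreal (2 / g1) * (\<integral>\<^sup>+ t. indicator {1..} t * (\<integral>\<^sup>+ z. kk t x z * kk t y z \<partial>lborel) \<partial>lborel)"
    by (rule nn_integral_cmult) measurable
  finally show ?thesis .
qed

lemma nn_prod_mult:
  fixes A B :: "'a::euclidean_space \<Rightarrow> ennreal"
  assumes [measurable]: "A \<in> borel_measurable lborel" "B \<in> borel_measurable lborel"
  shows "(\<integral>\<^sup>+ p. A (fst p) * B (snd p) \<partial>(lborel \<Otimes>\<^sub>M lborel)) = (\<integral>\<^sup>+ x. A x \<partial>lborel) * (\<integral>\<^sup>+ y. B y \<partial>lborel)"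
proof -
  have "(\<integral>\<^sup>+ p. A (fst p) * B (snd p) \<partial>(lborel \<Otimes>\<^sub>M lborel)) = (\<integral>\<^sup>+ x. \<integral>\<^sup>+ y. A x * B y \<partial>lborel \<partial>lborel)"
    by (subst lborel.nn_integral_fst[symmetric]) auto
  also have "\<dots> = (\<integral>\<^sup>+ x. A x * (\<integral>\<^sup>+ y. B y \<partial>lborel) \<partial>lborel)"
    by (simp add: nn_integral_cmult)
  also have "\<dots> = (\<integral>\<^sup>+ x. A x \<partial>lborel) * (\<integral>\<^sup>+ y. B y \<partial>lborel)"
    by (simp add: nn_integral_multc)
  finally show ?thesis .
qed

lemma Kf_pair:
  fixes a b :: "complex \<Rightarrow> ennreal"
  assumes [measurable]: "a \<in> borel_measurable lborel" "b \<in> borel_measurable lborel"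
  shows "(\<integral>\<^sup>+ p. Kf (fst p) (snd p) * a (fst p) * b (snd p) \<partial>(lborel \<Otimes>\<^sub>M lborel))
    = ennreal (2 / g1) * (\<integral>\<^sup>+ t. \<integral>\<^sup>+ z. indicator {1..} t * ((\<integral>\<^sup>+ x. kk t x z * a x \<partial>lborel) * (\<integral>\<^sup>+ y. kk t y z * b y \<partial>lborel)) \<partial>lborel \<partial>lborel)"
proof -
  define H where "H p t z = indicator {1..} t * (kk t (fst p) z * a (fst p)) * (kk t (snd p) z * b (snd p))"
    for p :: "complex \<times> complex" and t :: real and z :: complex
  have Hm[measurable]: "(\<lambda>q. H (fst (fst q)) (snd (fst q)) (snd q)) \<in> borel_measurable (((lborel \<Otimes>\<^sub>M lborel) \<Otimes>\<^sub>M lborel) \<Otimes>\<^sub>M lborel)"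
    unfolding H_def by measurable
  have Hm2[measurable]: "(\<lambda>q. H (fst q) t (snd q)) \<in> borel_measurable ((lborel \<Otimes>\<^sub>M lborel) \<Otimes>\<^sub>M lborel)" for t
    unfolding H_def by measurable
  have "(\<integral>\<^sup>+ p. Kf (fst p) (snd p) * a (fst p) * b (snd p) \<partial>(lborel \<Otimes>\<^sub>M lborel))
      = (\<integral>\<^sup>+ p. ennreal (2 / g1) * (\<integral>\<^sup>+ t. \<integral>\<^sup>+ z. H p t z \<partial>lborel \<partial>lborel) \<partial>(lborel \<Otimes>\<^sub>M lborel))"
  proof (rule nn_integral_cong)
    fix p :: "complex \<times> complex"
    have "(\<integral>\<^sup>+ t. \<integral>\<^sup>+ z. H p t z \<partial>lborel \<partial>lborel) = (\<integral>\<^sup>+ t. indicator {1..} t * (\<integral>\<^sup>+ z. kk t (fst p) z * kk t (snd p) z \<partial>lborel) * (a (fst p) * b (snd p)) \<partial>lborel)"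
    proof (rule nn_integral_cong)
      fix t
      have "(\<integral>\<^sup>+ z. H p t z \<partial>lborel) = (\<integral>\<^sup>+ z. (indicator {1..} t * (kk t (fst p) z * kk t (snd p) z)) * (a (fst p) * b (snd p)) \<partial>lborel)"
        unfolding H_def by (intro nn_integral_cong) (simp add: mult_ac)
      also have "\<dots> = (\<integral>\<^sup>+ z. indicator {1..} t * (kk t (fst p) z * kk t (snd p) z) \<partial>lborel) * (a (fst p) * b (snd p))"
        by (rule nn_integral_multc) measurable
      also have "\<dots> = indicator {1..} t * (\<integral>\<^sup>+ z. kk t (fst p) z * kk t (snd p) z \<partial>lborel) * (a (fst p) * b (snd p))"
        by (subst nn_integral_cmult) auto
      finally show "(\<integral>\<^sup>+ z. H p t z \<partial>lborel) = indicator {1..} t * (\<integral>\<^sup>+ z. kk t (fst p) z * kk t (snd p) z \<partial>lborel) * (a (fst p) * b (snd p))" .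
    qed
    also have "\<dots> = (\<integral>\<^sup>+ t. indicator {1..} t * (\<integral>\<^sup>+ z. kk t (fst p) z * kk t (snd p) z \<partial>lborel) \<partial>lborel) * (a (fst p) * b (snd p))"
      by (rule nn_integral_multc) measurable
    finally show "Kf (fst p) (snd p) * a (fst p) * b (snd p) = ennreal (2 / g1) * (\<integral>\<^sup>+ t. \<integral>\<^sup>+ z. H p t z \<partial>lborel \<partial>lborel)"
      unfolding Kf_rep by (simp add: mult_ac)
  qed
  also have "\<dots> = ennreal (2 / g1) * (\<integral>\<^sup>+ p. (\<integral>\<^sup>+ t. \<integral>\<^sup>+ z. H p t z \<partial>lborel \<partial>lborel) \<partial>(lborel \<Otimes>\<^sub>M lborel))"
    by (rule nn_integral_cmult) measurable
  also have "(\<integral>\<^sup>+ p. (\<integral>\<^sup>+ t. \<integral>\<^sup>+ z. H p t z \<partial>lborel \<partial>lborel) \<partial>(lborel \<Otimes>\<^sub>M lborel))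
      = (\<integral>\<^sup>+ t. (\<integral>\<^sup>+ p. \<integral>\<^sup>+ z. H p t z \<partial>lborel \<partial>(lborel \<Otimes>\<^sub>M lborel)) \<partial>lborel)"
    by (rule PR.Fubini'[symmetric]) measurable
  also have "\<dots> = (\<integral>\<^sup>+ t. (\<integral>\<^sup>+ z. \<integral>\<^sup>+ p. H p t z \<partial>(lborel \<Otimes>\<^sub>M lborel) \<partial>lborel) \<partial>lborel)"
    by (intro nn_integral_cong PL.Fubini'[symmetric]) measurable
  also have "\<dots> = (\<integral>\<^sup>+ t. \<integral>\<^sup>+ z. indicator {1..} t * ((\<integral>\<^sup>+ x. kk t x z * a x \<partial>lborel) * (\<integral>\<^sup>+ y. kk t y z * b y \<partial>lborel)) \<partial>lborel \<partial>lborel)"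
  proof (intro nn_integral_cong)
    fix t z
    have "(\<integral>\<^sup>+ p. H p t z \<partial>(lborel \<Otimes>\<^sub>M lborel)) = indicator {1..} t * (\<integral>\<^sup>+ p. (kk t (fst p) z * a (fst p)) * (kk t (snd p) z * b (snd p)) \<partial>(lborel \<Otimes>\<^sub>M lborel))"
      unfolding H_def by (subst nn_integral_cmult[symmetric]) (auto simp: mult_ac)
    also have "\<dots> = indicator {1..} t * ((\<integral>\<^sup>+ x. kk t x z * a x \<partial>lborel) * (\<integral>\<^sup>+ y. kk t y z * b y \<partial>lborel))"
      by (subst nn_prod_mult) auto
    finally show "(\<integral>\<^sup>+ p. H p t z \<partial>(lborel \<Otimes>\<^sub>M lborel)) = indicator {1..} t * ((\<integral>\<^sup>+ x. kk t x z * a x \<partial>lborel) * (\<integral>\<^sup>+ y. kk t y z * b y \<partial>lborel))" .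
  qed
  finally show ?thesis .
qed



lemma ennreal_amgm: "2 * (u * v) \<le> u * u + v * (v :: ennreal)"
proof (cases u rule: ennreal_cases)
  case (real a)
  show ?thesis
  proof (cases v rule: ennreal_cases)
    case (real b)
    have "2 * (a * b) \<le> a * a + b * b" using sum_squares_ge_zero[of "a - b" 0] 
      by (simp add: algebra_simps power2_eq_square)
    then have "ennreal (2 * (a * b)) \<le> ennreal (a * a + b * b)" by (rule ennreal_leI)
    moreover have "ennreal (2 * (a * b)) = 2 * (ennreal a * ennreal b)"
      using \<open>0 \<le> a\<close> \<open>0 \<le> b\<close> by (simp add: ennreal_mult)
    moreover have "ennreal (a * a + b * b) = ennreal a * ennreal a + ennreal b * ennreal b"
      using \<open>0 \<le> a\<close> \<open>0 \<le> b\<close> by (simp add: ennreal_mult ennreal_plus)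
    ultimately show ?thesis using \<open>u = ennreal a\<close> real by simp
  next
    case top
    then show ?thesis by (simp add: top_unique)
  qed
next
  case top
  then show ?thesis by simp
qed

lemma Kf_cs:
  fixes a b :: "complex \<Rightarrow> ennreal"
  assumes [measurable]: "a \<in> borel_measurable lborel" "b \<in> borel_measurable lborel"
  shows "2 * (\<integral>\<^sup>+ p. Kf (fst p) (snd p) * a (fst p) * b (snd p) \<partial>(lborel \<Otimes>\<^sub>M lborel))
    \<le> (\<integral>\<^sup>+ p. Kf (fst p) (snd p) * a (fst p) * a (snd p) \<partial>(lborel \<Otimes>\<^sub>M lborel))
     + (\<integral>\<^sup>+ p. Kf (fst p) (snd p) * b (fst p) * b (snd p) \<partial>(lborel \<Otimes>\<^sub>M lborel))"
proof -
  define A where "A t z = (\<integral>\<^sup>+ x. kk t x z * a x \<partial>lborel)" for t z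
  define B where "B t z = (\<integral>\<^sup>+ x. kk t x z * b x \<partial>lborel)" for t z
  have Am[measurable]: "(\<lambda>q. A (fst q) (snd q)) \<in> borel_measurable (lborel \<Otimes>\<^sub>M lborel)"
    and Bm[measurable]: "(\<lambda>q. B (fst q) (snd q)) \<in> borel_measurable (lborel \<Otimes>\<^sub>M lborel)"
    unfolding A_def B_def by measurable
  have Am'[measurable]: "A t \<in> borel_measurable lborel" "B t \<in> borel_measurable lborel" for t
    unfolding A_def B_def by measurable
  define c where "c = ennreal (2 / g1)"
  have "2 * (\<integral>\<^sup>+ p. Kf (fst p) (snd p) * a (fst p) * b (snd p) \<partial>(lborel \<Otimes>\<^sub>M lborel))
     = c * (\<integral>\<^sup>+ t. \<integral>\<^sup>+ z. 2 * (indicator {1..} t * (A t z * B t z)) \<partial>lborel \<partial>lborel)"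
  proof -
    have i1: "(\<integral>\<^sup>+ z. 2 * (indicator {1..} t * (A t z * B t z)) \<partial>lborel) = 2 * (\<integral>\<^sup>+ z. indicator {1..} t * (A t z * B t z) \<partial>lborel)" for t
      by (rule nn_integral_cmult) measurable
    have i2: "(\<integral>\<^sup>+ t. 2 * (\<integral>\<^sup>+ z. indicator {1..} t * (A t z * B t z) \<partial>lborel) \<partial>lborel) = 2 * (\<integral>\<^sup>+ t. \<integral>\<^sup>+ z. indicator {1..} t * (A t z * B t z) \<partial>lborel \<partial>lborel)"
      by (rule nn_integral_cmult) measurable
    show ?thesis
      unfolding Kf_pair[of a b, simplified] A_def[symmetric] B_def[symmetric] c_def i1 i2
      by (simp add: mult_ac)
  qed
  also have "\<dots> \<le> c * (\<integral>\<^sup>+ t. \<integral>\<^sup>+ z. indicator {1..} t * (A t z * A t z) + indicator {1..} t * (B t z * B t z) \<partial>lborel \<partial>lborel)"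
  proof (intro mult_left_mono nn_integral_mono)
    fix t z
    show "2 * (indicator {1..} t * (A t z * B t z)) \<le> indicator {1..} t * (A t z * A t z) + indicator {1..} t * (B t z * B t z)"
      using ennreal_amgm[of "A t z" "B t z"] by (auto simp: indicator_def)
  qed auto
  also have "\<dots> = c * (\<integral>\<^sup>+ t. \<integral>\<^sup>+ z. indicator {1..} t * (A t z * A t z) \<partial>lborel \<partial>lborel)
      + c * (\<integral>\<^sup>+ t. \<integral>\<^sup>+ z. indicator {1..} t * (B t z * B t z) \<partial>lborel \<partial>lborel)"
  proof -
    have a1: "(\<integral>\<^sup>+ z. indicator {1..} t * (A t z * A t z) + indicator {1..} t * (B t z * B t z) \<partial>lborel)
       = (\<integral>\<^sup>+ z. indicator {1..} t * (A t z * A t z) \<partial>lborel) + (\<integral>\<^sup>+ z. indicator {1..} t * (B t z * B t z) \<partial>lborel)" for t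
      by (rule nn_integral_add) measurable
    have a2: "(\<integral>\<^sup>+ t. (\<integral>\<^sup>+ z. indicator {1..} t * (A t z * A t z) \<partial>lborel) + (\<integral>\<^sup>+ z. indicator {1..} t * (B t z * B t z) \<partial>lborel) \<partial>lborel)
       = (\<integral>\<^sup>+ t. \<integral>\<^sup>+ z. indicator {1..} t * (A t z * A t z) \<partial>lborel \<partial>lborel) + (\<integral>\<^sup>+ t. \<integral>\<^sup>+ z. indicator {1..} t * (B t z * B t z) \<partial>lborel \<partial>lborel)"
      by (rule nn_integral_add) measurable
    show ?thesis unfolding a1 a2 distrib_left ..
  qed
  also have "\<dots> = (\<integral>\<^sup>+ p. Kf (fst p) (snd p) * a (fst p) * a (snd p) \<partial>(lborel \<Otimes>\<^sub>M lborel))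
     + (\<integral>\<^sup>+ p. Kf (fst p) (snd p) * b (fst p) * b (snd p) \<partial>(lborel \<Otimes>\<^sub>M lborel))"
    unfolding Kf_pair[of a a, simplified] Kf_pair[of b b, simplified] A_def[symmetric] B_def[symmetric] c_def
    by simp
  finally show ?thesis .
qed



lemma log1p_bound:
  fixes x y :: complex and R :: real
  assumes y: "norm y < R"
  shows "ln (1 + norm x) \<le> ln (1 + R) + ln 2 + \<bar>ln (norm (x - y))\<bar>"
proof -
  define d where "d = norm (x - y)"
  have d0: "0 \<le> d" by (simp add: d_def)
  have R0: "0 < 1 + R" using y norm_ge_zero[of y] by linarith
  have "1 + norm x \<le> 1 + d + norm y" unfolding d_def using norm_triangle_ineq[of "x - y" y] by simp
  also have "\<dots> \<le> (1 + R) * (1 + d)" using y d0 by (simp add: algebra_simps) (smt (verit) mult_nonneg_nonneg norm_ge_zero)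
  finally have "ln (1 + norm x) \<le> ln ((1 + R) * (1 + d))"
    by (intro ln_mono) (auto simp: add_pos_nonneg)
  also have "\<dots> = ln (1 + R) + ln (1 + d)" using R0 d0 ln_mult[of "1 + R" "1 + d"] by simp
  also have "ln (1 + d) \<le> ln 2 + \<bar>ln d\<bar>"
  proof (cases "d \<le> 1")
    case True
    then have "ln (1 + d) \<le> ln 2" using d0 by simp
    then show ?thesis by simp
  next
    case False
    then have "1 + d \<le> 2 * d" by simp
    then have "ln (1 + d) \<le> ln (2 * d)" using d0 by (intro ln_mono) auto
    also have "\<dots> = ln 2 + ln d" using False ln_mult[of 2 d] by simp
    finally show ?thesis using False by simp
  qed
  finally show ?thesis by (simp add: d_def)
qed

lemma log_moment:
  fixes \<rho> :: "complex \<Rightarrow> real"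
  assumes \<rho>m[measurable]: "\<rho> \<in> borel_measurable lborel" and nn: "\<And>x. 0 \<le> \<rho> x"
    and mass: "(\<integral>\<^sup>+ x. ennreal (\<rho> x) \<partial>lborel) = 1"
    and E: "(\<integral>\<^sup>+ p. ennreal (\<bar>ln (norm (fst p - snd p))\<bar> * \<rho> (fst p) * \<rho> (snd p)) \<partial>(lborel \<Otimes>\<^sub>M lborel)) < \<infinity>"
  shows "(\<integral>\<^sup>+ x. ennreal (ln (1 + norm x) * \<rho> x) \<partial>lborel) < \<infinity>"
proof -
  have \<rho>b[measurable]: "\<rho> \<in> borel_measurable borel" using \<rho>m by simp
  have ballm[measurable]: "ball (0::complex) r \<in> sets borel" for r by simp
  have meas: "(\<lambda>y. ennreal (\<rho> y) * indicator (ball 0 (real n)) y) \<in> borel_measurable borel" for n :: nat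
    by measurable
  have "\<exists>n::nat. (\<integral>\<^sup>+ y. ennreal (\<rho> y) * indicator (ball 0 (real n)) y \<partial>lborel) \<noteq> 0"
  proof (rule ccontr)
    assume "\<not> ?thesis"
    then have "\<forall>n::nat. AE y in lborel. ennreal (\<rho> y) * indicator (ball 0 (real n)) y = 0"
      using meas by (subst (asm) nn_integral_0_iff_AE) auto
    then have "AE y in lborel. \<forall>n::nat. ennreal (\<rho> y) * indicator (ball 0 (real n)) y = 0"
      by (rule AE_all_countable[THEN iffD2])
    then have "AE y in lborel. ennreal (\<rho> y) = 0"
    proof eventually_elim
      case (elim y)
      obtain n :: nat where "norm y < real n" using reals_Archimedean2 by blast
      then show ?case using elim[rule_format, of n] by (simp add: indicator_def)
    qed
    then have "(\<integral>\<^sup>+ x. ennreal (\<rho> x) \<partial>lborel) = 0" by (subst nn_integral_0_iff_AE) auto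
    then show False using mass by simp
  qed
  then obtain n :: nat where mpos: "(\<integral>\<^sup>+ y. ennreal (\<rho> y) * indicator (ball 0 (real n)) y \<partial>lborel) \<noteq> 0" by blast
  define m where "m = (\<integral>\<^sup>+ y. ennreal (\<rho> y) * indicator (ball 0 (real n)) y \<partial>lborel)"
  define C where "C = ln (1 + real n) + ln 2"
  have C0: "0 \<le> C" unfolding C_def by simp
  have key: "m * ennreal (ln (1 + norm x)) \<le> ennreal C + (\<integral>\<^sup>+ y. ennreal (\<bar>ln (norm (x - y))\<bar> * \<rho> y) \<partial>lborel)" for x
  proof -
    have "m * ennreal (ln (1 + norm x)) = (\<integral>\<^sup>+ y. ennreal (\<rho> y) * indicator (ball 0 (real n)) y * ennreal (ln (1 + norm x)) \<partial>lborel)"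
      unfolding m_def by (rule nn_integral_multc[symmetric]) measurable
    also have "\<dots> \<le> (\<integral>\<^sup>+ y. ennreal C * ennreal (\<rho> y) + ennreal (\<bar>ln (norm (x - y))\<bar> * \<rho> y) \<partial>lborel)"
    proof (rule nn_integral_mono)
      fix y :: complex
      show "ennreal (\<rho> y) * indicator (ball 0 (real n)) y * ennreal (ln (1 + norm x)) \<le> ennreal C * ennreal (\<rho> y) + ennreal (\<bar>ln (norm (x - y))\<bar> * \<rho> y)"
      proof (cases "y \<in> ball 0 (real n)")
        case True
        then have "norm y < real n" by simp
        from log1p_bound[OF this, of x]
        have "\<rho> y * ln (1 + norm x) \<le> \<rho> y * (C + \<bar>ln (norm (x - y))\<bar>)"
          unfolding C_def by (intro mult_left_mono nn) auto
        then have "ennreal (\<rho> y * ln (1 + norm x)) \<le> ennreal (C * \<rho> y + \<bar>ln (norm (x - y))\<bar> * \<rho> y)"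
          by (intro ennreal_leI) (simp add: algebra_simps)
        then show ?thesis using True nn[of y] C0
          by (simp add: ennreal_mult'[symmetric] ennreal_plus[symmetric] del: ennreal_plus)
      qed simp
    qed
    also have "\<dots> = ennreal C * (\<integral>\<^sup>+ y. ennreal (\<rho> y) \<partial>lborel) + (\<integral>\<^sup>+ y. ennreal (\<bar>ln (norm (x - y))\<bar> * \<rho> y) \<partial>lborel)"
      by (subst nn_integral_add) (auto simp: nn_integral_cmult)
    finally show ?thesis using mass by simp
  qed
  have "m * (\<integral>\<^sup>+ x. ennreal (ln (1 + norm x) * \<rho> x) \<partial>lborel) = (\<integral>\<^sup>+ x. ennreal (\<rho> x) * (m * ennreal (ln (1 + norm x))) \<partial>lborel)"
    by (subst nn_integral_cmult[symmetric]) (auto intro!: nn_integral_cong simp: ennreal_mult'' mult_ac nn)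
  also have "\<dots> \<le> (\<integral>\<^sup>+ x. ennreal (\<rho> x) * ennreal C + ennreal (\<rho> x) * (\<integral>\<^sup>+ y. ennreal (\<bar>ln (norm (x - y))\<bar> * \<rho> y) \<partial>lborel) \<partial>lborel)"
    by (intro nn_integral_mono) (auto simp: distrib_left[symmetric] intro!: mult_left_mono key)
  also have "\<dots> = (\<integral>\<^sup>+ x. ennreal (\<rho> x) \<partial>lborel) * ennreal C + (\<integral>\<^sup>+ x. \<integral>\<^sup>+ y. ennreal (\<bar>ln (norm (x - y))\<bar> * \<rho> x * \<rho> y) \<partial>lborel \<partial>lborel)"
  proof -
    have "\<And>x. ennreal (\<rho> x) * (\<integral>\<^sup>+ y. ennreal (\<bar>ln (norm (x - y))\<bar> * \<rho> y) \<partial>lborel) = (\<integral>\<^sup>+ y. ennreal (\<bar>ln (norm (x - y))\<bar> * \<rho> x * \<rho> y) \<partial>lborel)"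
      by (subst nn_integral_cmult[symmetric]) (auto intro!: nn_integral_cong simp: ennreal_mult'[symmetric] nn mult_ac)
    then show ?thesis by (subst nn_integral_add) (auto simp: nn_integral_multc)
  qed
  also have "(\<integral>\<^sup>+ x. \<integral>\<^sup>+ y. ennreal (\<bar>ln (norm (x - y))\<bar> * \<rho> x * \<rho> y) \<partial>lborel \<partial>lborel)
     = (\<integral>\<^sup>+ p. ennreal (\<bar>ln (norm (fst p - snd p))\<bar> * \<rho> (fst p) * \<rho> (snd p)) \<partial>(lborel \<Otimes>\<^sub>M lborel))"
    by (subst lborel.nn_integral_fst[symmetric]) auto
  finally have "m * (\<integral>\<^sup>+ x. ennreal (ln (1 + norm x) * \<rho> x) \<partial>lborel) < \<infinity>"
    using E mass by (simp add: order_le_less_trans)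
  then show ?thesis using mpos unfolding m_def by (auto simp: ennreal_mult_less_top)
qed



lemma inv2_fin: "inverse (2::ennreal) < top"
proof -
  have "inverse (ennreal 2) = ennreal (inverse 2)" by (rule inverse_ennreal) simp
  then show ?thesis by (metis ennreal_less_top ennreal_numeral)
qed

lemma enn_split2:
  fixes c d u v :: real
  assumes "0 \<le> c" "0 \<le> d" "0 \<le> u" "0 \<le> v"
  shows "ennreal (c + d) * ennreal u * ennreal v = ennreal (c * u * v) + ennreal d * (ennreal u * ennreal v)"
proof -
  have "ennreal (c + d) = ennreal c + ennreal d" by (rule ennreal_plus[OF assms(1,2)])
  moreover have "ennreal (c * u * v) = ennreal c * ennreal u * ennreal v"
    using assms by (simp add: ennreal_mult)
  ultimately show ?thesis by (simp add: distrib_right mult.assoc)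
qed

lemma enn_split3:
  fixes A B u v :: real
  assumes "0 \<le> A" "0 \<le> B" "0 \<le> u" "0 \<le> v"
  shows "ennreal ((A + B) * u * v) = ennreal (A * u) * ennreal v + ennreal u * ennreal (B * v)"
proof -
  have "(A + B) * u * v = A * u * v + u * (B * v)" by (simp add: algebra_simps)
  then have "ennreal ((A + B) * u * v) = ennreal (A * u * v) + ennreal (u * (B * v))"
    using assms by (simp add: ennreal_plus[symmetric] del: ennreal_plus)
  also have "ennreal (A * u * v) = ennreal (A * u) * ennreal v" using assms by (simp add: ennreal_mult)
  also have "ennreal (u * (B * v)) = ennreal u * ennreal (B * v)" using assms by (simp add: ennreal_mult)
  finally show ?thesis .
qed

lemma Kf_self_fin:
  fixes \<rho> :: "complex \<Rightarrow> real"
  assumes \<rho>m[measurable]: "\<rho> \<in> borel_measurable lborel" and nn: "\<And>x. 0 \<le> \<rho> x"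
    and mass: "(\<integral>\<^sup>+ x. ennreal (\<rho> x) \<partial>lborel) = 1"
    and E: "(\<integral>\<^sup>+ p. ennreal (\<bar>ln (norm (fst p - snd p))\<bar> * \<rho> (fst p) * \<rho> (snd p)) \<partial>(lborel \<Otimes>\<^sub>M lborel)) < \<infinity>"
  shows "(\<integral>\<^sup>+ p. Kf (fst p) (snd p) * ennreal (\<rho> (fst p)) * ennreal (\<rho> (snd p)) \<partial>(lborel \<Otimes>\<^sub>M lborel)) < \<infinity>"
proof -
  have "(\<integral>\<^sup>+ p. Kf (fst p) (snd p) * ennreal (\<rho> (fst p)) * ennreal (\<rho> (snd p)) \<partial>(lborel \<Otimes>\<^sub>M lborel))
     \<le> (\<integral>\<^sup>+ p. ennreal (\<bar>ln (norm (fst p - snd p))\<bar> * \<rho> (fst p) * \<rho> (snd p)) + ennreal (1 / 2) * (ennreal (\<rho> (fst p)) * ennreal (\<rho> (snd p))) \<partial>(lborel \<Otimes>\<^sub>M lborel))"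
  proof (rule nn_integral_mono_AE)
    show "AE p in lborel \<Otimes>\<^sub>M lborel. Kf (fst p) (snd p) * ennreal (\<rho> (fst p)) * ennreal (\<rho> (snd p))
        \<le> ennreal (\<bar>ln (norm (fst p - snd p))\<bar> * \<rho> (fst p) * \<rho> (snd p)) + ennreal (1 / 2) * (ennreal (\<rho> (fst p)) * ennreal (\<rho> (snd p)))"
      using AE_offdiag
    proof eventually_elim
      case (elim p)
      have "Kf (fst p) (snd p) * ennreal (\<rho> (fst p)) * ennreal (\<rho> (snd p))
          \<le> ennreal (\<bar>ln (norm (fst p - snd p))\<bar> + 1 / 2) * ennreal (\<rho> (fst p)) * ennreal (\<rho> (snd p))"
        by (intro mult_right_mono Kf_le elim) auto
      also have "\<dots> = ennreal (\<bar>ln (norm (fst p - snd p))\<bar> * \<rho> (fst p) * \<rho> (snd p)) + ennreal (1 / 2) * (ennreal (\<rho> (fst p)) * ennreal (\<rho> (snd p)))"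
        by (rule enn_split2) (auto simp: nn)
      finally show ?case .
    qed
  qed
  also have "\<dots> = (\<integral>\<^sup>+ p. ennreal (\<bar>ln (norm (fst p - snd p))\<bar> * \<rho> (fst p) * \<rho> (snd p)) \<partial>(lborel \<Otimes>\<^sub>M lborel))
     + ennreal (1 / 2) * ((\<integral>\<^sup>+ x. ennreal (\<rho> x) \<partial>lborel) * (\<integral>\<^sup>+ x. ennreal (\<rho> x) \<partial>lborel))"
  proof -
    have pm: "(\<integral>\<^sup>+ p. ennreal (\<rho> (fst p)) * ennreal (\<rho> (snd p)) \<partial>(lborel \<Otimes>\<^sub>M lborel)) = (\<integral>\<^sup>+ x. ennreal (\<rho> x) \<partial>lborel) * (\<integral>\<^sup>+ x. ennreal (\<rho> x) \<partial>lborel)"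
      by (rule nn_prod_mult) measurable
    have cm: "(\<integral>\<^sup>+ p. ennreal (1 / 2) * (ennreal (\<rho> (fst p)) * ennreal (\<rho> (snd p))) \<partial>(lborel \<Otimes>\<^sub>M lborel)) = ennreal (1 / 2) * (\<integral>\<^sup>+ p. ennreal (\<rho> (fst p)) * ennreal (\<rho> (snd p)) \<partial>(lborel \<Otimes>\<^sub>M lborel))"
      by (rule nn_integral_cmult) measurable
    show ?thesis by (subst nn_integral_add) (measurable, simp only: cm pm)
  qed
  also have "\<dots> < \<infinity>"
  proof -
    show ?thesis using E mass inv2_fin by (simp add: ennreal_mult_less_top)
  qed
  finally show ?thesis .
qed

lemma cross_energy:
  fixes \<rho>1 \<rho>2 :: "complex \<Rightarrow> real"
  assumes m1[measurable]: "\<rho>1 \<in> borel_measurable lborel" and nn1: "\<And>x. 0 \<le> \<rho>1 x"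
    and mass1: "(\<integral>\<^sup>+ x. ennreal (\<rho>1 x) \<partial>lborel) = 1"
    and E1: "(\<integral>\<^sup>+ p. ennreal (\<bar>ln (norm (fst p - snd p))\<bar> * \<rho>1 (fst p) * \<rho>1 (snd p)) \<partial>(lborel \<Otimes>\<^sub>M lborel)) < \<infinity>"
  assumes m2[measurable]: "\<rho>2 \<in> borel_measurable lborel" and nn2: "\<And>x. 0 \<le> \<rho>2 x"
    and mass2: "(\<integral>\<^sup>+ x. ennreal (\<rho>2 x) \<partial>lborel) = 1"
    and E2: "(\<integral>\<^sup>+ p. ennreal (\<bar>ln (norm (fst p - snd p))\<bar> * \<rho>2 (fst p) * \<rho>2 (snd p)) \<partial>(lborel \<Otimes>\<^sub>M lborel)) < \<infinity>"
  shows "(\<integral>\<^sup>+ p. ennreal (\<bar>ln (norm (fst p - snd p))\<bar> * \<rho>1 (fst p) * \<rho>2 (snd p)) \<partial>(lborel \<Otimes>\<^sub>M lborel)) < \<infinity>"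
proof -
  define a where "a x = ennreal (\<rho>1 x)" for x
  define b where "b x = ennreal (\<rho>2 x)" for x
  have am[measurable]: "a \<in> borel_measurable lborel" and bm[measurable]: "b \<in> borel_measurable lborel"
    unfolding a_def b_def by measurable
  define L where "L x y = ln (1 + norm x) + ln (1 + norm y) + 1 / 2" for x y :: complex
  have "(\<integral>\<^sup>+ p. ennreal (\<bar>ln (norm (fst p - snd p))\<bar> * \<rho>1 (fst p) * \<rho>2 (snd p)) \<partial>(lborel \<Otimes>\<^sub>M lborel))
    \<le> (\<integral>\<^sup>+ p. (ennreal (ln (1 + norm (fst p)) * \<rho>1 (fst p)) * b (snd p) + a (fst p) * ennreal (ln (1 + norm (snd p)) * \<rho>2 (snd p))
          + ennreal (1 / 2) * (a (fst p) * b (snd p))) + Kf (fst p) (snd p) * a (fst p) * b (snd p) \<partial>(lborel \<Otimes>\<^sub>M lborel))"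
  proof (rule nn_integral_mono_AE)
    show "AE p in lborel \<Otimes>\<^sub>M lborel. ennreal (\<bar>ln (norm (fst p - snd p))\<bar> * \<rho>1 (fst p) * \<rho>2 (snd p))
       \<le> (ennreal (ln (1 + norm (fst p)) * \<rho>1 (fst p)) * b (snd p) + a (fst p) * ennreal (ln (1 + norm (snd p)) * \<rho>2 (snd p))
          + ennreal (1 / 2) * (a (fst p) * b (snd p))) + Kf (fst p) (snd p) * a (fst p) * b (snd p)"
      using AE_offdiag
    proof eventually_elim
      case (elim p)
      have "ennreal (\<bar>ln (norm (fst p - snd p))\<bar> * \<rho>1 (fst p) * \<rho>2 (snd p)) = ennreal \<bar>ln (norm (fst p - snd p))\<bar> * a (fst p) * b (snd p)"
        using nn1 nn2 by (simp add: a_def b_def ennreal_mult'[symmetric] mult.assoc)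
      also have "\<dots> \<le> (ennreal (L (fst p) (snd p)) + Kf (fst p) (snd p)) * a (fst p) * b (snd p)"
        unfolding L_def by (intro mult_right_mono log_le_Kf elim) auto
      also have "\<dots> = ennreal (L (fst p) (snd p)) * a (fst p) * b (snd p) + Kf (fst p) (snd p) * a (fst p) * b (snd p)"
        by (simp add: distrib_right)
      also have "ennreal (L (fst p) (snd p)) * a (fst p) * b (snd p) = (ennreal (ln (1 + norm (fst p)) * \<rho>1 (fst p)) * b (snd p) + a (fst p) * ennreal (ln (1 + norm (snd p)) * \<rho>2 (snd p))
          + ennreal (1 / 2) * (a (fst p) * b (snd p)))"
        unfolding L_def a_def b_def
        by (subst enn_split2, simp_all add: nn1 nn2 add_nonneg_nonneg, subst enn_split3, simp_all add: nn1 nn2)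
      finally show ?case .
    qed
  qed
  also have "\<dots> = ((\<integral>\<^sup>+ x. ennreal (ln (1 + norm x) * \<rho>1 x) \<partial>lborel) * (\<integral>\<^sup>+ y. b y \<partial>lborel)
      + (\<integral>\<^sup>+ x. a x \<partial>lborel) * (\<integral>\<^sup>+ y. ennreal (ln (1 + norm y) * \<rho>2 y) \<partial>lborel)
      + ennreal (1 / 2) * ((\<integral>\<^sup>+ x. a x \<partial>lborel) * (\<integral>\<^sup>+ y. b y \<partial>lborel)))
      + (\<integral>\<^sup>+ p. Kf (fst p) (snd p) * a (fst p) * b (snd p) \<partial>(lborel \<Otimes>\<^sub>M lborel))"
  proof -
    have p1: "(\<integral>\<^sup>+ p. ennreal (ln (1 + norm (fst p)) * \<rho>1 (fst p)) * b (snd p) \<partial>(lborel \<Otimes>\<^sub>M lborel)) = (\<integral>\<^sup>+ x. ennreal (ln (1 + norm x) * \<rho>1 x) \<partial>lborel) * (\<integral>\<^sup>+ y. b y \<partial>lborel)"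
      by (rule nn_prod_mult) measurable
    have p2: "(\<integral>\<^sup>+ p. a (fst p) * ennreal (ln (1 + norm (snd p)) * \<rho>2 (snd p)) \<partial>(lborel \<Otimes>\<^sub>M lborel)) = (\<integral>\<^sup>+ x. a x \<partial>lborel) * (\<integral>\<^sup>+ y. ennreal (ln (1 + norm y) * \<rho>2 y) \<partial>lborel)"
      by (rule nn_prod_mult) measurable
    have p3: "(\<integral>\<^sup>+ p. a (fst p) * b (snd p) \<partial>(lborel \<Otimes>\<^sub>M lborel)) = (\<integral>\<^sup>+ x. a x \<partial>lborel) * (\<integral>\<^sup>+ y. b y \<partial>lborel)"
      by (rule nn_prod_mult) measurable
    have c3: "(\<integral>\<^sup>+ p. ennreal (1 / 2) * (a (fst p) * b (snd p)) \<partial>(lborel \<Otimes>\<^sub>M lborel)) = ennreal (1 / 2) * (\<integral>\<^sup>+ p. a (fst p) * b (snd p) \<partial>(lborel \<Otimes>\<^sub>M lborel))"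
      by (rule nn_integral_cmult) measurable
    show ?thesis
      apply (subst nn_integral_add, measurable)
      apply (subst nn_integral_add, measurable)
      apply (subst nn_integral_add, measurable)
      apply (simp only: p1 p2 p3 c3)
      done
  qed
  also have "\<dots> < \<infinity>"
  proof -
    have M1: "(\<integral>\<^sup>+ x. ennreal (ln (1 + norm x) * \<rho>1 x) \<partial>lborel) < \<infinity>" by (rule log_moment[OF m1 nn1 mass1 E1])
    have M2: "(\<integral>\<^sup>+ x. ennreal (ln (1 + norm x) * \<rho>2 x) \<partial>lborel) < \<infinity>" by (rule log_moment[OF m2 nn2 mass2 E2])
    have K1: "(\<integral>\<^sup>+ p. Kf (fst p) (snd p) * a (fst p) * a (snd p) \<partial>(lborel \<Otimes>\<^sub>M lborel)) < \<infinity>"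
      unfolding a_def by (rule Kf_self_fin[OF m1 nn1 mass1 E1])
    have K2: "(\<integral>\<^sup>+ p. Kf (fst p) (snd p) * b (fst p) * b (snd p) \<partial>(lborel \<Otimes>\<^sub>M lborel)) < \<infinity>"
      unfolding b_def by (rule Kf_self_fin[OF m2 nn2 mass2 E2])
    have "2 * (\<integral>\<^sup>+ p. Kf (fst p) (snd p) * a (fst p) * b (snd p) \<partial>(lborel \<Otimes>\<^sub>M lborel)) < \<infinity>"
      using Kf_cs[OF am bm] K1 K2 by (simp add: order_le_less_trans)
    then have K12: "(\<integral>\<^sup>+ p. Kf (fst p) (snd p) * a (fst p) * b (snd p) \<partial>(lborel \<Otimes>\<^sub>M lborel)) < \<infinity>"
      by (auto simp: ennreal_mult_less_top)
    show ?thesis using M1 M2 K12 mass1 mass2 unfolding a_def b_def using inv2_fin by (simp add: ennreal_mult_less_top)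
  qed
  finally show ?thesis .
qed



lemma ln_diff_prod:
  fixes a b :: real assumes a: "0 < a" and b: "0 < b"
  shows "0 \<le> (a - b) * (ln a - ln b)" and "(a - b) * (ln a - ln b) = 0 \<Longrightarrow> a = b"
proof -
  show "0 \<le> (a - b) * (ln a - ln b)"
  proof (cases "a \<le> b")
    case True
    then have "ln a \<le> ln b" using a b by simp
    then show ?thesis using True by (simp add: mult_nonpos_nonpos)
  next
    case False
    then have "ln b \<le> ln a" using a b by simp
    then show ?thesis using False by simp
  qed
  assume "(a - b) * (ln a - ln b) = 0"
  then have "a = b \<or> ln a = ln b" by simp
  then show "a = b" using a b by auto
qed

lemma sol_integrable:
  assumes "is_fp_solution \<Upsilon> H \<beta> \<rho>"
  shows "integrable lborel \<rho>" and "(\<integral>x. \<rho> x \<partial>lborel) = 1"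
proof -
  have "has_bochner_integral lborel \<rho> 1"
    by (rule has_bochner_integral_nn_integral) (use assms in \<open>auto simp: is_fp_solution_def\<close>)
  then show "integrable lborel \<rho>" and "(\<integral>x. \<rho> x \<partial>lborel) = 1"
    by (auto simp: has_bochner_integral_iff)
qed

lemma energy_integrable:
  fixes \<rho>1 \<rho>2 :: "complex \<Rightarrow> real"
  assumes m1[measurable]: "\<rho>1 \<in> borel_measurable lborel" and nn1: "\<And>x. 0 \<le> \<rho>1 x"
    and m2[measurable]: "\<rho>2 \<in> borel_measurable lborel" and nn2: "\<And>x. 0 \<le> \<rho>2 x"
    and E: "(\<integral>\<^sup>+ p. ennreal (\<bar>ln (norm (fst p - snd p))\<bar> * \<rho>1 (fst p) * \<rho>2 (snd p)) \<partial>(lborel \<Otimes>\<^sub>M lborel)) < \<infinity>"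
  shows "integrable (lborel \<Otimes>\<^sub>M lborel) (\<lambda>p. \<bar>ln (norm (fst p - snd p))\<bar> * \<rho>1 (fst p) * \<rho>2 (snd p))"
proof (rule integrableI_bounded)
  show "(\<lambda>p. \<bar>ln (norm (fst p - snd p))\<bar> * \<rho>1 (fst p) * \<rho>2 (snd p)) \<in> borel_measurable (lborel \<Otimes>\<^sub>M lborel)"
    by measurable
  have "\<And>p. norm (\<bar>ln (norm (fst p - snd p))\<bar> * \<rho>1 (fst p) * \<rho>2 (snd p)) = \<bar>ln (norm (fst p - snd p))\<bar> * \<rho>1 (fst p) * \<rho>2 (snd p)"
    using nn1 nn2 by (simp add: abs_mult)
  then show "(\<integral>\<^sup>+ p. ennreal (norm (\<bar>ln (norm (fst p - snd p))\<bar> * \<rho>1 (fst p) * \<rho>2 (snd p))) \<partial>(lborel \<Otimes>\<^sub>M lborel)) < \<infinity>"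
    using E by simp
qed



theorem theorem9p1:
  fixes \<Upsilon> H :: "complex \<Rightarrow> real" and \<beta> :: real and \<rho>1 \<rho>2 :: "complex \<Rightarrow> real"
  assumes Ups_meas: "\<Upsilon> \<in> borel_measurable lborel"
    and Ups_bdd: "\<exists>M. AE x in lborel. \<bar>\<Upsilon> x\<bar> \<le> M"
    and Ups_nonneg: "AE x in lborel. 0 \<le> \<Upsilon> x"
    and Ups_nonzero: "\<not> (AE x in lborel. \<Upsilon> x = 0)"
    and H_harm: "entire_harmonic H"
    and decay: "\<And>\<gamma>. 0 < \<gamma> \<Longrightarrow> \<gamma> < 2 \<Longrightarrow>
        ((\<lambda>y. \<integral>\<^sup>+ x\<in>ball y 1. ennreal (\<Upsilon> x * exp (2 * H x) * norm (x - y) powr (- \<gamma>)) \<partial>lborel)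
          \<longlongrightarrow> 0) at_infinity"
    and moment: "\<exists>q>0. (\<integral>\<^sup>+ x. ennreal (\<Upsilon> x * exp (2 * H x) * norm x powr q) \<partial>lborel) < \<infinity>"
    and beta_neg: "\<beta> < 0"
    and sol1: "is_fp_solution \<Upsilon> H \<beta> \<rho>1"
    and sol2: "is_fp_solution \<Upsilon> H \<beta> \<rho>2"
  shows "AE x in lborel. \<rho>1 x = \<rho>2 x"
proof -
  note S1 = sol1[unfolded is_fp_solution_def]
  note S2 = sol2[unfolded is_fp_solution_def]
  have m1[measurable]: "\<rho>1 \<in> borel_measurable lborel" and nn1: "\<And>x. 0 \<le> \<rho>1 x"
    and mass1: "(\<integral>\<^sup>+ x. ennreal (\<rho>1 x) \<partial>lborel) = 1"
    and E1: "(\<integral>\<^sup>+ p. ennreal (\<bar>ln (norm (fst p - snd p))\<bar> * \<rho>1 (fst p) * \<rho>1 (snd p)) \<partial>(lborel \<Otimes>\<^sub>M lborel)) < \<infinity>"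
    and L1: "AE x in lborel. integrable lborel (\<lambda>y. ln (norm (x - y)) * \<rho>1 y)"
    and Z1: "(\<integral>z. fp_num \<Upsilon> H \<beta> \<rho>1 z \<partial>lborel) > 0"
    and eq1: "AE x in lborel. \<rho>1 x = fp_num \<Upsilon> H \<beta> \<rho>1 x / (\<integral>z. fp_num \<Upsilon> H \<beta> \<rho>1 z \<partial>lborel)"
    using S1 by auto
  have m2[measurable]: "\<rho>2 \<in> borel_measurable lborel" and nn2: "\<And>x. 0 \<le> \<rho>2 x"
    and mass2: "(\<integral>\<^sup>+ x. ennreal (\<rho>2 x) \<partial>lborel) = 1"
    and E2: "(\<integral>\<^sup>+ p. ennreal (\<bar>ln (norm (fst p - snd p))\<bar> * \<rho>2 (fst p) * \<rho>2 (snd p)) \<partial>(lborel \<Otimes>\<^sub>M lborel)) < \<infinity>"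
    and L2: "AE x in lborel. integrable lborel (\<lambda>y. ln (norm (x - y)) * \<rho>2 y)"
    and Z2: "(\<integral>z. fp_num \<Upsilon> H \<beta> \<rho>2 z \<partial>lborel) > 0"
    and eq2: "AE x in lborel. \<rho>2 x = fp_num \<Upsilon> H \<beta> \<rho>2 x / (\<integral>z. fp_num \<Upsilon> H \<beta> \<rho>2 z \<partial>lborel)"
    using S2 by auto
  define z1 where "z1 = (\<integral>z. fp_num \<Upsilon> H \<beta> \<rho>1 z \<partial>lborel)"
  define z2 where "z2 = (\<integral>z. fp_num \<Upsilon> H \<beta> \<rho>2 z \<partial>lborel)"
  define U1 where "U1 = log_pot \<rho>1"
  define U2 where "U2 = log_pot \<rho>2"
  define f where "f x = \<rho>1 x - \<rho>2 x" for x
  have fm[measurable]: "f \<in> borel_measurable lborel" unfolding f_def by measurable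
  have i1: "integrable lborel \<rho>1" and int1: "(\<integral>x. \<rho>1 x \<partial>lborel) = 1" using sol_integrable[OF sol1] by auto
  have i2: "integrable lborel \<rho>2" and int2: "(\<integral>x. \<rho>2 x \<partial>lborel) = 1" using sol_integrable[OF sol2] by auto
  have fi: "integrable lborel f" unfolding f_def using i1 i2 by auto
  have f0: "(\<integral>x. f x \<partial>lborel) = 0" unfolding f_def using i1 i2 int1 int2 by simp
  have E12: "(\<integral>\<^sup>+ p. ennreal (\<bar>ln (norm (fst p - snd p))\<bar> * \<rho>1 (fst p) * \<rho>2 (snd p)) \<partial>(lborel \<Otimes>\<^sub>M lborel)) < \<infinity>"
    by (rule cross_energy[OF m1 nn1 mass1 E1 m2 nn2 mass2 E2])
  have E21: "(\<integral>\<^sup>+ p. ennreal (\<bar>ln (norm (fst p - snd p))\<bar> * \<rho>2 (fst p) * \<rho>1 (snd p)) \<partial>(lborel \<Otimes>\<^sub>M lborel)) < \<infinity>"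
    by (rule cross_energy[OF m2 nn2 mass2 E2 m1 nn1 mass1 E1])
  note I11 = energy_integrable[OF m1 nn1 m1 nn1 E1]
    and I12 = energy_integrable[OF m1 nn1 m2 nn2 E12]
    and I21 = energy_integrable[OF m2 nn2 m1 nn1 E21]
    and I22 = energy_integrable[OF m2 nn2 m2 nn2 E2]
  have Eint: "integrable (lborel \<Otimes>\<^sub>M lborel) (\<lambda>p. ln (norm (fst p - snd p)) * (f (fst p) * f (snd p)))"
  proof (rule Bochner_Integration.integrable_bound[OF Bochner_Integration.integrable_add[OF Bochner_Integration.integrable_add[OF I11 I12] Bochner_Integration.integrable_add[OF I21 I22]]])
    show "(\<lambda>p. ln (norm (fst p - snd p)) * (f (fst p) * f (snd p))) \<in> borel_measurable (lborel \<Otimes>\<^sub>M lborel)"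
      by measurable
    show "AE p in lborel \<Otimes>\<^sub>M lborel. norm (ln (norm (fst p - snd p)) * (f (fst p) * f (snd p))) \<le>
      norm (\<bar>ln (norm (fst p - snd p))\<bar> * \<rho>1 (fst p) * \<rho>1 (snd p) + \<bar>ln (norm (fst p - snd p))\<bar> * \<rho>1 (fst p) * \<rho>2 (snd p) +
            (\<bar>ln (norm (fst p - snd p))\<bar> * \<rho>2 (fst p) * \<rho>1 (snd p) + \<bar>ln (norm (fst p - snd p))\<bar> * \<rho>2 (fst p) * \<rho>2 (snd p)))"
    proof (rule AE_I2)
      fix p :: "complex \<times> complex"
      define l where "l = \<bar>ln (norm (fst p - snd p))\<bar>"
      have l0: "0 \<le> l" by (simp add: l_def)
      have fa: "\<bar>f x\<bar> \<le> \<rho>1 x + \<rho>2 x" for x unfolding f_def using nn1[of x] nn2[of x] by linarith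
      have "norm (ln (norm (fst p - snd p)) * (f (fst p) * f (snd p))) = l * (\<bar>f (fst p)\<bar> * \<bar>f (snd p)\<bar>)"
        by (simp add: l_def abs_mult)
      also have "\<dots> \<le> l * ((\<rho>1 (fst p) + \<rho>2 (fst p)) * (\<rho>1 (snd p) + \<rho>2 (snd p)))"
        by (intro mult_left_mono mult_mono fa l0) (auto intro: add_nonneg_nonneg nn1 nn2)
      also have "\<dots> = l * \<rho>1 (fst p) * \<rho>1 (snd p) + l * \<rho>1 (fst p) * \<rho>2 (snd p) + (l * \<rho>2 (fst p) * \<rho>1 (snd p) + l * \<rho>2 (fst p) * \<rho>2 (snd p))"
        by (simp add: algebra_simps)
      also have "\<dots> \<le> norm (l * \<rho>1 (fst p) * \<rho>1 (snd p) + l * \<rho>1 (fst p) * \<rho>2 (snd p) + (l * \<rho>2 (fst p) * \<rho>1 (snd p) + l * \<rho>2 (fst p) * \<rho>2 (snd p)))"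
        by simp
      finally show "norm (ln (norm (fst p - snd p)) * (f (fst p) * f (snd p))) \<le>
        norm (\<bar>ln (norm (fst p - snd p))\<bar> * \<rho>1 (fst p) * \<rho>1 (snd p) + \<bar>ln (norm (fst p - snd p))\<bar> * \<rho>1 (fst p) * \<rho>2 (snd p) +
            (\<bar>ln (norm (fst p - snd p))\<bar> * \<rho>2 (fst p) * \<rho>1 (snd p) + \<bar>ln (norm (fst p - snd p))\<bar> * \<rho>2 (fst p) * \<rho>2 (snd p)))"
        unfolding l_def .
    qed
  qed
  define J where "J = (\<integral>p. ln (norm (fst p - snd p)) * (f (fst p) * f (snd p)) \<partial>(lborel \<Otimes>\<^sub>M lborel))"
  have J0: "J \<le> 0" unfolding J_def by (rule log_pd[OF fi f0 Eint])
  have Jfst: "(\<integral>x. \<integral>y. ln (norm (x - y)) * (f x * f y) \<partial>lborel \<partial>lborel) = J"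
    unfolding J_def using lborel_pair.integral_fst'[OF Eint] by simp
  have Jint: "integrable lborel (\<lambda>x. \<integral>y. ln (norm (x - y)) * (f x * f y) \<partial>lborel)"
    using lborel_pair.integrable_fst'[OF Eint] by simp
  have Ueq: "AE x in lborel. (\<integral>y. ln (norm (x - y)) * (f x * f y) \<partial>lborel) = f x * (U1 x - U2 x)"
    using L1 L2
  proof eventually_elim
    case (elim x)
    have "(\<integral>y. ln (norm (x - y)) * (f x * f y) \<partial>lborel) = (\<integral>y. f x * (ln (norm (x - y)) * \<rho>1 y - ln (norm (x - y)) * \<rho>2 y) \<partial>lborel)"
      unfolding f_def by (simp add: algebra_simps)
    also have "\<dots> = f x * ((\<integral>y. ln (norm (x - y)) * \<rho>1 y \<partial>lborel) - (\<integral>y. ln (norm (x - y)) * \<rho>2 y \<partial>lborel))"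
      using elim by simp
    finally show ?case unfolding U1_def U2_def log_pot_def .
  qed
  have Um[measurable]: "U1 \<in> borel_measurable lborel" "U2 \<in> borel_measurable lborel"
    unfolding U1_def U2_def log_pot_def by measurable
  have Di: "integrable lborel (\<lambda>x. f x * (U1 x - U2 x))"
    using Jint by (rule integrable_cong_AE_imp) (use Ueq in \<open>auto simp: eq_commute\<close>)
  have DJ: "(\<integral>x. f x * (U1 x - U2 x) \<partial>lborel) = J"
  proof -
    have "(\<integral>x. f x * (U1 x - U2 x) \<partial>lborel) = (\<integral>x. (\<integral>y. ln (norm (x - y)) * (f x * f y) \<partial>lborel) \<partial>lborel)"
      apply (rule integral_cong_AE)
        apply measurable
      using Ueq by (auto simp: eq_commute)
    then show ?thesis using Jfst by simp
  qed
  define c where "c = ln z2 - ln z1"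
  define D' where "D' x = f x * (- \<beta> * (U1 x - U2 x) + c)" for x
  have D'eq: "D' = (\<lambda>x. (- \<beta>) * (f x * (U1 x - U2 x)) + c * f x)"
    unfolding D'_def by (auto simp: algebra_simps)
  have D'i: "integrable lborel D'" unfolding D'eq using Di fi by auto
  have D'int: "(\<integral>x. D' x \<partial>lborel) = (- \<beta>) * J"
    unfolding D'eq using Di fi DJ f0 by simp
  have D'le: "(\<integral>x. D' x \<partial>lborel) \<le> 0"
    unfolding D'int using beta_neg J0 by (simp add: mult_nonpos_nonpos)
  have D'AE: "AE x in lborel. 0 \<le> D' x \<and> (D' x = 0 \<longrightarrow> \<rho>1 x = \<rho>2 x)"
    using eq1 eq2
  proof eventually_elim
    case (elim x)
    have z1p: "0 < z1" and z2p: "0 < z2" using Z1 Z2 by (simp_all add: z1_def z2_def)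
    define e1 where "e1 = exp (- \<beta> * U1 x + 2 * H x)"
    define e2 where "e2 = exp (- \<beta> * U2 x + 2 * H x)"
    have r1: "\<rho>1 x = \<Upsilon> x * e1 / z1" and r2: "\<rho>2 x = \<Upsilon> x * e2 / z2"
      using elim unfolding fp_num_def e1_def e2_def U1_def U2_def z1_def z2_def by auto
    show ?case
    proof (cases "\<Upsilon> x = 0")
      case True
      then show ?thesis using r1 r2 by (simp add: D'_def f_def)
    next
      case False
      have "0 \<le> \<Upsilon> x * e1 / z1" using nn1[of x] r1 by simp
      then have "0 \<le> \<Upsilon> x" using z1p by (simp add: e1_def zero_le_divide_iff zero_le_mult_iff)
      then have Up: "0 < \<Upsilon> x" using False by simp
      have p1: "0 < \<rho>1 x" and p2: "0 < \<rho>2 x" using r1 r2 Up z1p z2p by (simp_all add: e1_def e2_def)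
      have l1: "ln (\<rho>1 x) = ln (\<Upsilon> x) + (- \<beta> * U1 x + 2 * H x) - ln z1"
        unfolding r1 e1_def using Up z1p by (simp add: ln_div ln_mult)
      have l2: "ln (\<rho>2 x) = ln (\<Upsilon> x) + (- \<beta> * U2 x + 2 * H x) - ln z2"
        unfolding r2 e2_def using Up z2p by (simp add: ln_div ln_mult)
      have "D' x = (\<rho>1 x - \<rho>2 x) * (ln (\<rho>1 x) - ln (\<rho>2 x))"
        unfolding D'_def f_def c_def l1 l2 by (simp add: algebra_simps)
      then show ?thesis using ln_diff_prod[OF p1 p2] by simp
    qed
  qed
  have "0 \<le> (\<integral>x. D' x \<partial>lborel)" by (rule integral_nonneg_AE) (use D'AE in auto)
  then have "(\<integral>x. D' x \<partial>lborel) = 0" using D'le by simp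
  then have "AE x in lborel. D' x = 0"
    using integral_nonneg_eq_0_iff_AE[OF D'i] D'AE by auto
  then show ?thesis using D'AE by eventually_elim auto
qed

end
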